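(* Let $p$ be a prime, $s\ge1$, and let $F_{G(s)}(x,y)=\sum\alpha_{ij}x^iy^j$ be the formal group law over $\mathbb{Q}$ with logarithm $$x+\frac{x^{p^s}}{p}+\frac{x^{p^{2s}}}{p^2}+\frac{x^{p^{3s}}}{p^3}+\cdots.$$ Then for all $i,j\ge0$ with $i+j\ge1$, $$\alpha_{ij}=\sum_{\substack{(\nu_1,\nu_2,\dots)\\ \sum_{r\ge1}(p^{rs}-1)\nu_r=i+j-1}}\ \sum_{\substack{i_0+\sum_{r\ge1}p^{rs}i_r=i\\ j_0+\sum_{r\ge1}p^{rs}j_r=j\\ i_r+j_r+k_r=\nu_r\ (r\ge1)}}(-1)^{\sum_r k_r}\frac{\bigl(i_0+j_0+\sum_{r\ge1}(i_r+j_r+k_r)-1\bigr)!}{i_0!\,j_0!\,\prod_{r\ge1}i_r!\,j_r!\,k_r!\ \cdot\ p^{\sum_{r\ge1}r\nu_r}},$$ all indices ranging over nonnegative integers (finitely many nonzero). In particular $\alpha_{ij}=0$ unless $p^s-1$ divides $i+j-1$.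
   Context: This is the formal group law of the theory $G(s)$, obtained from Brown–Peterson cohomology $BP$ (coefficients $\mathbb{Z}_{(p)}[v_1,v_2,\dots]$, Hazewinkel generators) by setting $v_i=0$ for all $i\ge1$, $i\ne s$, and then setting $v_s=1$. *)

theory Defs
  imports Complex_Main "HOL-Computational_Algebra.Formal_Power_Series" "HOL-Computational_Algebra.Primes"
begin

text \<open>A bivariate power series sum alpha_ij x^i y^j over the rationals is encoded as an
  element of (rat fps) fps: the outer variable is y, the inner variable is x.\<close>
definition biv :: "(nat \<Rightarrow> nat \<Rightarrow> rat) \<Rightarrow> rat fps fps" where
  "biv \<alpha> = Abs_fps (\<lambda>j. Abs_fps (\<lambda>i. \<alpha> i j))"

definition glog_coeff :: "nat \<Rightarrow> nat \<Rightarrow> nat \<Rightarrow> rat" where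
  "glog_coeff p s n = (if \<exists>k. n = p ^ (k * s)
      then 1 / of_nat p ^ (THE k. n = p ^ (k * s)) else 0)"

text \<open>Coefficient of x^i y^j in the composite f(F(x,y)) of a univariate series with
  coefficients f and a bivariate series F with coefficients alpha, where alpha 0 0 = 0
  (so only powers F^n with n <= i+j contribute).\<close>
definition comp_biv :: "(nat \<Rightarrow> rat) \<Rightarrow> (nat \<Rightarrow> nat \<Rightarrow> rat) \<Rightarrow> nat \<Rightarrow> nat \<Rightarrow> rat" where
  "comp_biv f \<alpha> i j = (\<Sum>n\<in>{0..i+j}. f n * fps_nth (fps_nth (biv \<alpha> ^ n) j) i)"

text \<open>alpha is (the coefficient array of) the formal group law with logarithm f:
  F(0,0) = 0 and f(F(x,y)) = f(x) + f(y).\<close>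
definition fgl_with_log :: "(nat \<Rightarrow> rat) \<Rightarrow> (nat \<Rightarrow> nat \<Rightarrow> rat) \<Rightarrow> bool" where
  "fgl_with_log f \<alpha> \<longleftrightarrow> \<alpha> 0 0 = 0 \<and>
     (\<forall>i j. comp_biv f \<alpha> i j = (if j = 0 then f i else 0) + (if i = 0 then f j else 0))"

definition nu_set :: "nat \<Rightarrow> nat \<Rightarrow> nat \<Rightarrow> (nat \<Rightarrow> nat) set" where
  "nu_set p s m = {\<nu>. \<nu> 0 = 0 \<and> finite {r. \<nu> r \<noteq> 0} \<and>
      (\<Sum>r\<in>{r. \<nu> r \<noteq> 0}. (p ^ (r * s) - 1) * \<nu> r) = m}"

text \<open>Index tuples (i_0, i_1, ...), (j_0, j_1, ...), (k_1, k_2, ...) (k_0 := 0) with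
  i_0 + sum p^(rs) i_r = i, j_0 + sum p^(rs) j_r = j, i_r + j_r + k_r = nu_r (r >= 1).\<close>
definition idx_set :: "nat \<Rightarrow> nat \<Rightarrow> (nat \<Rightarrow> nat) \<Rightarrow> nat \<Rightarrow> nat
    \<Rightarrow> ((nat \<Rightarrow> nat) \<times> (nat \<Rightarrow> nat) \<times> (nat \<Rightarrow> nat)) set" where
  "idx_set p s \<nu> i j = {(a, b, c). c 0 = 0 \<and> (\<forall>r\<ge>1. a r + b r + c r = \<nu> r) \<and>
      a 0 + (\<Sum>r\<in>{r. \<nu> r \<noteq> 0}. p ^ (r * s) * a r) = i \<and>
      b 0 + (\<Sum>r\<in>{r. \<nu> r \<noteq> 0}. p ^ (r * s) * b r) = j}"

definition term_G :: "nat \<Rightarrow> (nat \<Rightarrow> nat) \<Rightarrow> (nat \<Rightarrow> nat) \<Rightarrow> (nat \<Rightarrow> nat) \<Rightarrow> (nat \<Rightarrow> nat) \<Rightarrow> rat" where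
  "term_G p \<nu> a b c = (let S = {r. \<nu> r \<noteq> 0} in
     (-1) ^ (\<Sum>r\<in>S. c r) *
     of_nat (fact (a 0 + b 0 + (\<Sum>r\<in>S. a r + b r + c r) - 1)) /
     (of_nat (fact (a 0) * fact (b 0) * (\<Prod>r\<in>S. fact (a r) * fact (b r) * fact (c r)))
       * of_nat p ^ (\<Sum>r\<in>S. r * \<nu> r)))"

definition alpha_formula :: "nat \<Rightarrow> nat \<Rightarrow> nat \<Rightarrow> nat \<Rightarrow> rat" where
  "alpha_formula p s i j =
     (\<Sum>\<nu>\<in>nu_set p s (i + j - 1). \<Sum>(a, b, c)\<in>idx_set p s \<nu> i j. term_G p \<nu> a b c)"

end

theory Submission
  imports Defs
begin
unbundle fps_syntax

definition LD :: "'a::comm_ring_1 fps \<Rightarrow> 'a fps \<Rightarrow> 'a fps" where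
  "LD \<phi> G = Abs_fps (\<lambda>n. (G * \<phi>^n) $ n)"

lemma LD_add: "LD \<phi> (G + H) = LD \<phi> G + LD \<phi> H"
  by (simp add: LD_def fps_eq_iff distrib_right)

lemma LD_const: "LD \<phi> (fps_const c * G) = fps_const c * LD \<phi> G"
  by (simp add: LD_def fps_eq_iff mult.assoc)

lemma LD_X: "LD \<phi> (fps_X * H) = fps_X * LD \<phi> (\<phi> * H)"
proof (rule fps_ext)
  fix n show "LD \<phi> (fps_X * H) $ n = (fps_X * LD \<phi> (\<phi> * H)) $ n"
  proof (cases n)
    case 0 then show ?thesis by (simp add: LD_def)
  next
    case (Suc k)
    have "(fps_X * H * \<phi> ^ n) $ n = (H * \<phi>^n) $ k" using Suc by (simp add: mult.assoc)
    also have "\<dots> = (\<phi> * H * \<phi>^k) $ k" using Suc by (simp add: algebra_simps)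
    finally show ?thesis using Suc by (simp add: LD_def)
  qed
qed

lemma LD_one:
  fixes \<phi> :: "'a::{idom,semiring_char_0} fps"
  shows "LD \<phi> 1 = 1 + fps_X * LD \<phi> (fps_deriv \<phi>)"
proof (rule fps_ext)
  fix n show "LD \<phi> 1 $ n = (1 + fps_X * LD \<phi> (fps_deriv \<phi>)) $ n"
  proof (cases n)
    case 0 then show ?thesis by (simp add: LD_def)
  next
    case (Suc k)
    have "fps_deriv (\<phi> ^ Suc k) $ k = (of_nat (Suc k) * fps_deriv \<phi> * \<phi> ^ k) $ k"
      by (subst fps_deriv_power') simp
    hence "of_nat (Suc k) * (\<phi> ^ Suc k) $ Suc k = of_nat (Suc k) * (fps_deriv \<phi> * \<phi> ^ k) $ k"
      by (simp add: fps_of_nat mult.assoc del: of_nat_Suc power_Suc)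
    moreover have nz: "(of_nat (Suc k)::'a) \<noteq> 0" by (rule of_nat_neq_0)
    ultimately have "(\<phi> ^ Suc k) $ Suc k = (fps_deriv \<phi> * \<phi> ^ k) $ k"
      using mult_left_cancel[OF nz] by blast
    then show ?thesis using Suc by (simp add: LD_def del: power_Suc)
  qed
qed

context
  fixes \<phi> W :: "'a::{idom,semiring_char_0} fps"
  assumes W0: "W $ 0 = 0" and Weq: "W = fps_X * (\<phi> oo W)"
begin

definition LQ where "LQ = 1 - fps_X * (fps_deriv \<phi> oo W)"
definition LDelta where "LDelta G = LD \<phi> G * LQ - (G oo W)"

lemma LDelta_add: "LDelta (G + H) = LDelta G + LDelta H"
  by (simp add: LDelta_def LD_add fps_compose_add_distrib algebra_simps)

lemma LDelta_const: "LDelta (fps_const c) = fps_const c * LDelta 1"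
proof -
  have "LD \<phi> (fps_const c) = fps_const c * LD \<phi> 1" using LD_const[of \<phi> c 1] by simp
  thus ?thesis by (simp add: LDelta_def algebra_simps)
qed

lemma LDelta_X: "LDelta (fps_X * H) = fps_X * LDelta (\<phi> * H)"
proof -
  have "(fps_X * H) oo W = W * (H oo W)"
    by (simp add: fps_compose_mult_distrib[OF W0] W0)
  also have "\<dots> = fps_X * ((\<phi> * H) oo W)"
    by (subst Weq) (simp add: fps_compose_mult_distrib[OF W0] mult.assoc)
  finally show ?thesis by (simp add: LDelta_def LD_X algebra_simps)
qed

lemma LDelta_one: "LDelta 1 = fps_X * LDelta (fps_deriv \<phi>)"
  by (simp add: LDelta_def LD_one LQ_def algebra_simps)

lemma LDelta_zero: "LDelta G $ n = 0"
proof (induction n arbitrary: G)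
  case 0
  have "LD \<phi> G $ 0 = G $ 0" by (simp add: LD_def)
  then show ?case by (simp add: LDelta_def LQ_def)
next
  case (Suc n)
  define H where "H = Abs_fps (\<lambda>n. G $ Suc n)"
  have G: "G = fps_const (G $ 0) + fps_X * H"
    by (rule fps_ext) (simp add: H_def split: nat.split)
  have "LDelta G = fps_const (G $ 0) * (fps_X * LDelta (fps_deriv \<phi>)) + fps_X * LDelta (\<phi> * H)"
    by (subst G) (simp add: LDelta_add LDelta_const LDelta_one LDelta_X)
  then show ?case using Suc by (simp add: algebra_simps)
qed

lemma LD_Q: "LD \<phi> G * LQ = G oo W"
  using LDelta_zero[of G] by (simp add: LDelta_def fps_eq_iff)

lemma lagrange_deriv: "fps_deriv W = LD \<phi> \<phi>"
proof -
  have "fps_deriv W = (\<phi> oo W) + fps_X * ((fps_deriv \<phi> oo W) * fps_deriv W)"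
    by (subst Weq) (simp add: fps_compose_deriv[OF W0])
  hence "fps_deriv W * LQ = \<phi> oo W" by (simp add: LQ_def algebra_simps)
  hence "fps_deriv W * LQ = LD \<phi> \<phi> * LQ" by (simp add: LD_Q)
  moreover have "LQ \<noteq> 0"
  proof
    assume "LQ = 0" hence "LQ $ 0 = 0" by simp
    thus False by (simp add: LQ_def)
  qed
  ultimately show ?thesis by simp
qed

lemma lagrange_coeff: "of_nat (Suc n) * W $ Suc n = (\<phi> ^ Suc n) $ n"
proof -
  have "fps_deriv W $ n = LD \<phi> \<phi> $ n" by (simp add: lagrange_deriv)
  thus ?thesis by (simp add: LD_def mult.commute)
qed

end


definition fagree :: "nat \<Rightarrow> 'a fps \<Rightarrow> 'a fps \<Rightarrow> bool" where
  "fagree n A B \<longleftrightarrow> (\<forall>m\<le>n. A $ m = B $ m)"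

lemma fagree_mult:
  fixes A B C :: "'a::comm_ring_1 fps"
  assumes "fagree n A B" shows "fagree n (A * C) (B * C)"
  using assms unfolding fagree_def by (auto simp: fps_mult_nth intro!: sum.cong)

lemma fagree_power:
  fixes A B :: "'a::comm_ring_1 fps"
  assumes "fagree n A B" shows "fagree n (A ^ k) (B ^ k)"
proof (induction k)
  case 0 show ?case by (simp add: fagree_def)
next
  case (Suc k)
  have "fagree n (A * A^k) (B * A^k)" by (rule fagree_mult[OF assms])
  moreover have "fagree n (A^k * B) (B^k * B)" by (rule fagree_mult[OF Suc.IH])
  ultimately show ?case by (simp add: fagree_def mult.commute)
qed

lemma fagree_compose:
  fixes A B :: "'a::comm_ring_1 fps"
  assumes "fagree n A B" shows "fagree n (\<phi> oo A) (\<phi> oo B)"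
  using fagree_power[OF assms] unfolding fagree_def by (auto simp: fps_compose_nth intro!: sum.cong)

primrec lit :: "'a::comm_ring_1 fps \<Rightarrow> nat \<Rightarrow> 'a fps" where
  "lit \<phi> 0 = 0"
| "lit \<phi> (Suc k) = fps_X * (\<phi> oo lit \<phi> k)"

lemma lit_agree: "fagree k (lit \<phi> (Suc k)) (lit \<phi> k)"
proof (induction k)
  case 0 show ?case by (simp add: fagree_def)
next
  case (Suc k)
  have "fagree k (\<phi> oo lit \<phi> (Suc k)) (\<phi> oo lit \<phi> k)" by (rule fagree_compose[OF Suc.IH])
  thus ?case unfolding fagree_def by (auto simp: le_Suc_eq)
qed

lemma lit_stable: "k \<ge> Suc m \<Longrightarrow> lit \<phi> k $ m = lit \<phi> (Suc m) $ m"
proof (induction k rule: dec_induct)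
  case base show ?case ..
next
  case (step k)
  have "m \<le> k" using step by simp
  then have "lit \<phi> (Suc k) $ m = lit \<phi> k $ m" using lit_agree[of k \<phi>] by (simp add: fagree_def)
  then show ?case using step by simp
qed

lemma lagrange_exists:
  fixes \<phi> :: "'a::{idom,semiring_char_0} fps"
  shows "\<exists>W. W $ 0 = 0 \<and> W = fps_X * (\<phi> oo W) \<and>
     (\<forall>n. of_nat (Suc n) * W $ Suc n = (\<phi> ^ Suc n) $ n)"
proof -
  define W where "W = Abs_fps (\<lambda>n. lit \<phi> (Suc n) $ n)"
  have ag: "fagree n W (lit \<phi> (Suc n))" for n
    unfolding fagree_def W_def
  proof (intro allI impI)
    fix m assume "m \<le> n"
    then show "Abs_fps (\<lambda>n. lit \<phi> (Suc n) $ n) $ m = lit \<phi> (Suc n) $ m"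
      using lit_stable[of m "Suc n" \<phi>] by simp
  qed
  have W0: "W $ 0 = 0" by (simp add: W_def)
  have Weq: "W = fps_X * (\<phi> oo W)"
  proof (rule fps_ext)
    fix n show "W $ n = (fps_X * (\<phi> oo W)) $ n"
    proof (cases n)
      case 0 thus ?thesis by (simp add: W0)
    next
      case (Suc k)
      have "(\<phi> oo W) $ k = (\<phi> oo lit \<phi> (Suc k)) $ k"
        using fagree_compose[OF ag[of k]] by (simp add: fagree_def)
      thus ?thesis using Suc by (simp add: W_def)
    qed
  qed
  show ?thesis using W0 Weq lagrange_coeff[OF W0 Weq] by blast
qed



type_synonym R2 = "rat fps fps"

definition c2 :: "R2 \<Rightarrow> nat \<Rightarrow> nat \<Rightarrow> rat" where "c2 A i j = A $ j $ i"

lemma c2_biv[simp]: "c2 (biv \<alpha>) i j = \<alpha> i j" by (simp add: c2_def biv_def)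
lemma c2_add[simp]: "c2 (A + B) i j = c2 A i j + c2 B i j" by (simp add: c2_def)
lemma c2_diff[simp]: "c2 (A - B) i j = c2 A i j - c2 B i j" by (simp add: c2_def)
lemma c2_sum: "c2 (sum f S) i j = (\<Sum>x\<in>S. c2 (f x) i j)"
  by (induction S rule: infinite_finite_induct) (auto simp: c2_def)
lemma c2_zero[simp]: "c2 0 i j = 0" by (simp add: c2_def)
lemma c2_ext: "(\<And>i j. c2 A i j = c2 B i j) \<Longrightarrow> A = B"
  by (simp add: c2_def fps_eq_iff)
lemma biv_c2[simp]: "biv (\<lambda>i j. c2 A i j) = A"
  by (rule c2_ext) simp

lemma c2_mult: "c2 (A * B) i j = (\<Sum>j1=0..j. \<Sum>i1=0..i. c2 A i1 j1 * c2 B (i - i1) (j - j1))"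
  by (simp add: c2_def fps_mult_nth fps_sum_nth)

lemma c2_one: "c2 1 i j = (if i = 0 \<and> j = 0 then 1 else 0)"
  by (simp add: c2_def)

definition mon2 :: "rat \<Rightarrow> nat \<Rightarrow> nat \<Rightarrow> R2" where
  "mon2 c a b = biv (\<lambda>i j. if i = a \<and> j = b then c else 0)"

lemma c2_mon2: "c2 (mon2 c a b) i j = (if i = a \<and> j = b then c else 0)"
  by (simp add: mon2_def)

lemma c2_mon2_mult: "c2 (mon2 c a b * A) i j = (if a \<le> i \<and> b \<le> j then c * c2 A (i - a) (j - b) else 0)"
proof -
  have "c2 (mon2 c a b * A) i j = (\<Sum>j1=0..j. \<Sum>i1=0..i. (if i1 = a \<and> j1 = b then c * c2 A (i - i1) (j - j1) else 0))"
    unfolding c2_mult c2_mon2 by (intro sum.cong refl) auto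
  also have "\<dots> = (\<Sum>j1=0..j. if j1 = b then (if a \<le> i then c * c2 A (i - a) (j - j1) else 0) else 0)"
    by (rule sum.cong) (auto simp: sum.delta' if_distrib cong: if_cong)
  also have "\<dots> = (if a \<le> i \<and> b \<le> j then c * c2 A (i - a) (j - b) else 0)"
    by (auto simp: sum.delta')
  finally show ?thesis .
qed

lemma mon2_mult: "mon2 c a b * mon2 d a' b' = mon2 (c * d) (a + a') (b + b')"
  by (rule c2_ext) (auto simp: c2_mon2_mult c2_mon2)

lemma mon2_one: "mon2 1 0 0 = 1"
  by (rule c2_ext) (simp add: c2_mon2 c2_one)

lemma mon2_add: "mon2 c a b + mon2 d a b = mon2 (c + d) a b"
  by (rule c2_ext) (simp add: c2_mon2)

lemma c2_scal: "c2 (mon2 c 0 0 * A) i j = c * c2 A i j"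
  by (simp add: c2_mon2_mult)

lemma mon2_power: "mon2 c a b ^ k = mon2 (c ^ k) (k * a) (k * b)"
  by (induction k) (auto simp: mon2_one mon2_mult)

lemma mon2_of_nat: "(of_nat n :: R2) = mon2 (of_nat n) 0 0"
proof (rule c2_ext)
  fix i j show "c2 (of_nat n) i j = c2 (mon2 (of_nat n) 0 0) i j"
    by (induction n) (auto simp: c2_mon2 c2_one)
qed

definition ord2 :: "R2 \<Rightarrow> nat \<Rightarrow> bool" where
  "ord2 A d \<longleftrightarrow> (\<forall>i j. i + j < d \<longrightarrow> c2 A i j = 0)"

lemma ord2_mult: assumes "ord2 A a" "ord2 B b" shows "ord2 (A * B) (a + b)"
  unfolding ord2_def
proof (intro allI impI)
  fix i j assume ij: "i + j < a + b"
  show "c2 (A * B) i j = 0" unfolding c2_mult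
  proof (intro sum.neutral ballI)
    fix j1 i1 assume "j1 \<in> {0..j}" "i1 \<in> {0..i}"
    then show "c2 A i1 j1 * c2 B (i - i1) (j - j1) = 0"
      using assms ij unfolding ord2_def by (cases "i1 + j1 < a") auto
  qed
qed

lemma ord2_power: assumes "c2 A 0 0 = 0" shows "ord2 (A ^ n) n"
proof (induction n)
  case 0 show ?case by (simp add: ord2_def)
next
  case (Suc n)
  have "ord2 A 1" using assms by (auto simp: ord2_def)
  from ord2_mult[OF this Suc.IH] show ?case by simp
qed

definition bagree :: "nat \<Rightarrow> nat \<Rightarrow> R2 \<Rightarrow> R2 \<Rightarrow> bool" where
  "bagree i j A B \<longleftrightarrow> (\<forall>i'\<le>i. \<forall>j'\<le>j. c2 A i' j' = c2 B i' j')"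

lemma bagree_mult: assumes "bagree i j A B" "bagree i j C D" shows "bagree i j (A * C) (B * D)"
  using assms unfolding bagree_def c2_mult by (auto intro!: sum.cong)

lemma bagree_power: assumes "bagree i j A B" shows "bagree i j (A ^ n) (B ^ n)"
proof (induction n)
  case 0 show ?case by (simp add: bagree_def)
next
  case (Suc n) show ?case using bagree_mult[OF assms Suc.IH] by simp
qed



definition ev :: "R2 fps \<Rightarrow> R2" where
  "ev X = biv (\<lambda>i j. \<Sum>n\<le>2*(i+j). c2 (X $ n) i j)"

definition good :: "R2 fps \<Rightarrow> bool" where
  "good X \<longleftrightarrow> (\<forall>n i j. c2 (X $ n) i j \<noteq> 0 \<longrightarrow> n \<le> 2*(i+j))"

definition sgood :: "R2 fps \<Rightarrow> bool" where
  "sgood X \<longleftrightarrow> (\<forall>n i j. c2 (X $ n) i j \<noteq> 0 \<longrightarrow> n < 2*(i+j))"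

lemma c2_if[simp]: "c2 (if b then A else B) i j = (if b then c2 A i j else c2 B i j)"
  by simp

lemma swap3: "(\<Sum>k\<in>A. \<Sum>j\<in>B. \<Sum>i\<in>C. f k j i) = (\<Sum>j\<in>B. \<Sum>i\<in>C. \<Sum>k\<in>A. f k j i)"
proof -
  have "(\<Sum>k\<in>A. \<Sum>j\<in>B. \<Sum>i\<in>C. f k j i) = (\<Sum>j\<in>B. \<Sum>k\<in>A. \<Sum>i\<in>C. f k j i)"
    by (rule sum.swap)
  also have "\<dots> = (\<Sum>j\<in>B. \<Sum>i\<in>C. \<Sum>k\<in>A. f k j i)"
    by (intro sum.cong refl) (rule sum.swap)
  finally show ?thesis .
qed

lemma c2_ev: "c2 (ev X) i j = (\<Sum>n\<le>2*(i+j). c2 (X $ n) i j)"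
  by (simp add: ev_def)

lemma c2_fps_mult: "c2 ((X * Y) $ n) i j =
   (\<Sum>k\<le>n. \<Sum>j1=0..j. \<Sum>i1=0..i. c2 (X $ k) i1 j1 * c2 (Y $ (n - k)) (i - i1) (j - j1))"
  by (simp add: fps_mult_nth c2_sum c2_mult atLeast0AtMost)

lemma conv_box:
  fixes f :: "nat \<Rightarrow> nat \<Rightarrow> 'a::comm_monoid_add"
  assumes "\<And>k l. f k l \<noteq> 0 \<Longrightarrow> k \<le> A \<and> l \<le> B"
  shows "(\<Sum>n\<le>A+B. \<Sum>k\<le>n. f k (n - k)) = (\<Sum>k\<le>A. \<Sum>l\<le>B. f k l)"
proof -
  have "(\<Sum>n\<le>A+B. \<Sum>k\<le>n. f k (n - k)) = (\<Sum>(k,l)\<in>{(k,l). k+l \<le> A+B}. f k l)"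
    by (rule sum.triangle_reindex_eq[symmetric])
  also have "\<dots> = (\<Sum>(k,l)\<in>{..A}\<times>{..B}. f k l)"
  proof (rule sum.mono_neutral_right)
    have "{(k,l). k+l \<le> A+B} \<subseteq> {..A+B}\<times>{..A+B}" by auto
    thus "finite {(k,l). k+l \<le> A+B}" by (rule finite_subset) auto
    show "{..A}\<times>{..B} \<subseteq> {(k,l). k+l \<le> A+B}" by auto
    show "\<forall>x\<in>{(k, l). k + l \<le> A + B} - {..A} \<times> {..B}. (case x of (k, l) \<Rightarrow> f k l) = 0"
      using assms by fastforce
  qed
  also have "\<dots> = (\<Sum>k\<le>A. \<Sum>l\<le>B. f k l)"
    by (simp add: sum.cartesian_product)
  finally show ?thesis .
qed

lemma ev_mult:
  assumes gX: "good X" and gY: "good Y"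
  shows "ev (X * Y) = ev X * ev Y"
proof (rule c2_ext)
  fix i j
  have "c2 (ev (X * Y)) i j =
    (\<Sum>n\<le>2*(i+j). \<Sum>k\<le>n. \<Sum>j1=0..j. \<Sum>i1=0..i. c2 (X $ k) i1 j1 * c2 (Y $ (n - k)) (i - i1) (j - j1))"
    by (simp add: c2_ev c2_fps_mult)
  also have "\<dots> = (\<Sum>n\<le>2*(i+j). \<Sum>j1=0..j. \<Sum>i1=0..i. \<Sum>k\<le>n. c2 (X $ k) i1 j1 * c2 (Y $ (n - k)) (i - i1) (j - j1))"
    by (rule sum.cong[OF refl], rule swap3)
  also have "\<dots> = (\<Sum>j1=0..j. \<Sum>i1=0..i. \<Sum>n\<le>2*(i+j). \<Sum>k\<le>n. c2 (X $ k) i1 j1 * c2 (Y $ (n - k)) (i - i1) (j - j1))"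
    by (rule swap3)
  also have "\<dots> = (\<Sum>j1=0..j. \<Sum>i1=0..i. (\<Sum>k\<le>2*(i1+j1). c2 (X $ k) i1 j1) * (\<Sum>l\<le>2*((i-i1)+(j-j1)). c2 (Y $ l) (i - i1) (j - j1)))"
  proof (intro sum.cong refl)
    fix j1 i1 assume j1: "j1 \<in> {0..j}" and i1: "i1 \<in> {0..i}"
    have e: "2*(i+j) = 2*(i1+j1) + 2*((i-i1)+(j-j1))" using i1 j1 by auto
    show "(\<Sum>n\<le>2*(i+j). \<Sum>k\<le>n. c2 (X $ k) i1 j1 * c2 (Y $ (n - k)) (i - i1) (j - j1)) =
      (\<Sum>k\<le>2*(i1+j1). c2 (X $ k) i1 j1) * (\<Sum>l\<le>2*((i-i1)+(j-j1)). c2 (Y $ l) (i - i1) (j - j1))"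
      unfolding e sum_product
      by (rule conv_box) (use gX gY in \<open>auto simp: good_def\<close>)
  qed
  also have "\<dots> = c2 (ev X * ev Y) i j"
    by (simp add: c2_mult c2_ev)
  finally show "c2 (ev (X * Y)) i j = c2 (ev X * ev Y) i j" .
qed

lemma good_mult:
  assumes gX: "good X" and gY: "good Y" shows "good (X * Y)"
  unfolding good_def
proof (intro allI impI)
  fix n i j assume "c2 ((X * Y) $ n) i j \<noteq> 0"
  then obtain k j1 i1 where k: "k \<le> n" and j1: "j1 \<le> j" and i1: "i1 \<le> i"
    and nz: "c2 (X $ k) i1 j1 * c2 (Y $ (n - k)) (i - i1) (j - j1) \<noteq> 0"
    unfolding c2_fps_mult by (auto elim!: sum.not_neutral_contains_not_neutral)
  from nz gX have "k \<le> 2*(i1+j1)" by (auto simp: good_def)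
  moreover from nz gY have "n - k \<le> 2*((i-i1)+(j-j1))" by (auto simp: good_def)
  moreover have "2*(i1+j1) + 2*((i-i1)+(j-j1)) = 2*(i+j)" using i1 j1 by simp
  ultimately show "n \<le> 2*(i+j)" using k by linarith
qed

lemma sgood_mult:
  assumes gX: "good X" and gY: "sgood Y" shows "sgood (X * Y)"
  unfolding sgood_def
proof (intro allI impI)
  fix n i j assume "c2 ((X * Y) $ n) i j \<noteq> 0"
  then obtain k j1 i1 where k: "k \<le> n" and j1: "j1 \<le> j" and i1: "i1 \<le> i"
    and nz: "c2 (X $ k) i1 j1 * c2 (Y $ (n - k)) (i - i1) (j - j1) \<noteq> 0"
    unfolding c2_fps_mult by (auto elim!: sum.not_neutral_contains_not_neutral)
  from nz gX have "k \<le> 2*(i1+j1)" by (auto simp: good_def)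
  moreover from nz gY have "n - k < 2*((i-i1)+(j-j1))" by (auto simp: sgood_def)
  moreover have "2*(i1+j1) + 2*((i-i1)+(j-j1)) = 2*(i+j)" using i1 j1 by simp
  ultimately show "n < 2*(i+j)" using k by linarith
qed

lemma sgood_good: "sgood X \<Longrightarrow> good X"
  by (auto simp: sgood_def good_def less_imp_le)

lemma good_one: "good 1"
  by (auto simp: good_def c2_one)

lemma good_power: "good X \<Longrightarrow> good (X ^ n)"
  by (induction n) (auto simp: good_one good_mult)

lemma good_const: "good (fps_const g)"
  by (auto simp: good_def)

lemma ev_const: "ev (fps_const g) = g"
  by (rule c2_ext) (simp add: c2_ev c2_zero cong: if_cong)

lemma ev_power: "good X \<Longrightarrow> ev (X ^ n) = ev X ^ n"
proof (induction n)
  case 0 show ?case using ev_const[of 1] by simp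
next
  case (Suc n) then show ?case by (simp add: ev_mult good_power)
qed

lemma ev_add: "ev (X + Y) = ev X + ev Y"
  by (rule c2_ext) (simp add: c2_ev sum.distrib)

lemma ev_sum: "ev (sum f S) = (\<Sum>x\<in>S. ev (f x))"
  by (induction S rule: infinite_finite_induct) (auto simp: ev_add ev_const[of 0, simplified])

lemma ev_Xmult: assumes "sgood Z" shows "ev (fps_X * Z) = ev Z"
proof (rule c2_ext)
  fix i j
  have "c2 (ev (fps_X * Z)) i j = (\<Sum>n\<le>2*(i+j). if n = 0 then 0 else c2 (Z $ (n - 1)) i j)"
    by (simp add: c2_ev c2_zero cong: if_cong)
  also have "\<dots> = (\<Sum>n<2*(i+j). c2 (Z $ n) i j)"
  proof (cases "i + j")
    case 0 then show ?thesis by simp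
  next
    case (Suc k)
    have "(\<Sum>n\<le>2*(i+j). if n = 0 then 0 else c2 (Z $ (n - 1)) i j) =
          (\<Sum>n\<le>Suc (2*k+1). if n = 0 then 0 else c2 (Z $ (n - 1)) i j)" using Suc by simp
    also have "\<dots> = (\<Sum>n\<le>2*k+1. c2 (Z $ n) i j)" by (subst sum.atMost_Suc_shift) simp
    also have "\<dots> = (\<Sum>n<2*(i+j). c2 (Z $ n) i j)" using Suc
      by (simp add: lessThan_Suc_atMost[symmetric])
    finally show ?thesis .
  qed
  also have "\<dots> = (\<Sum>n\<le>2*(i+j). c2 (Z $ n) i j)"
    using assms unfolding sgood_def by (simp add: lessThan_Suc_atMost[symmetric]) (meson less_irrefl)
  finally show "c2 (ev (fps_X * Z)) i j = c2 (ev Z) i j" by (simp add: c2_ev)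
qed



definition sc :: "rat \<Rightarrow> R2 fps" where "sc q = fps_const (mon2 q 0 0)"

lemma sc_mult: "sc a * sc b = sc (a * b)"
  by (simp add: sc_def mon2_mult)

lemma sc_one: "sc 1 = 1" by (simp add: sc_def mon2_one)

lemma sc_of_nat: "(of_nat n :: R2 fps) = sc (of_nat n)"
  by (simp add: sc_def mon2_of_nat[symmetric] fps_of_nat)

definition comps :: "'l set \<Rightarrow> nat \<Rightarrow> ('l \<Rightarrow> nat) set" where
  "comps L n = {m. (\<forall>l. l \<notin> L \<longrightarrow> m l = 0) \<and> (\<Sum>l\<in>L. m l) = n}"

definition mnq :: "'l set \<Rightarrow> ('l \<Rightarrow> nat) \<Rightarrow> rat" where
  "mnq L m = fact (\<Sum>l\<in>L. m l) / (\<Prod>l\<in>L. fact (m l))"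

lemma finite_comps: assumes "finite L" shows "finite (comps L n)"
proof -
  have "comps L n \<subseteq> {m. \<forall>x. (x \<in> L \<longrightarrow> m x \<in> {..n}) \<and> (x \<notin> L \<longrightarrow> m x = 0)}"
  proof
    fix m assume m: "m \<in> comps L n"
    { fix x assume "x \<in> L"
      hence "m x \<le> (\<Sum>l\<in>L. m l)" using assms by (intro member_le_sum) auto
      hence "m x \<le> n" using m by (simp add: comps_def) }
    then show "m \<in> {m. \<forall>x. (x \<in> L \<longrightarrow> m x \<in> {..n}) \<and> (x \<notin> L \<longrightarrow> m x = 0)}"
      using m by (auto simp: comps_def)
  qed
  moreover have "finite {m. \<forall>x. (x \<in> L \<longrightarrow> m x \<in> {..n}) \<and> (x \<notin> L \<longrightarrow> m x = (0::nat))}"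
    by (rule finite_set_of_finite_funs) (use assms in auto)
  ultimately show ?thesis by (rule finite_subset)
qed

lemma comps_empty: "comps {} n = (if n = 0 then {\<lambda>_. 0} else {})"
  by (auto simp: comps_def)

lemma multinomial:
  fixes u :: "'l \<Rightarrow> R2 fps"
  assumes "finite L"
  shows "(\<Sum>l\<in>L. u l) ^ n = (\<Sum>m\<in>comps L n. sc (mnq L m) * (\<Prod>l\<in>L. u l ^ m l))"
  using assms
proof (induction L arbitrary: n rule: finite_induct)
  case empty
  then show ?case by (simp add: comps_empty mnq_def sc_one)
next
  case (insert a L)
  let ?P = "\<lambda>m. \<Prod>l\<in>L. u l ^ m l"
  have "(\<Sum>l\<in>insert a L. u l) ^ n = (u a + (\<Sum>l\<in>L. u l)) ^ n"
    using insert by simp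
  also have "\<dots> = (\<Sum>k\<le>n. of_nat (n choose k) * u a ^ k * (\<Sum>l\<in>L. u l) ^ (n - k))"
    by (rule binomial_ring)
  also have "\<dots> = (\<Sum>k\<le>n. \<Sum>m\<in>comps L (n - k). sc (of_nat (n choose k) * mnq L m) * u a ^ k * ?P m)"
    by (simp add: insert.IH sum_distrib_left sc_of_nat mult.assoc flip: sc_mult)
       (intro sum.cong refl, simp add: mult.left_commute)
  also have "\<dots> = (\<Sum>(k,m)\<in>Sigma {..n} (\<lambda>k. comps L (n - k)). sc (of_nat (n choose k) * mnq L m) * u a ^ k * ?P m)"
    by (rule sum.Sigma) (auto intro: finite_comps insert.hyps)
  also have "\<dots> = (\<Sum>m\<in>comps (insert a L) n. sc (mnq (insert a L) m) * (\<Prod>l\<in>insert a L. u l ^ m l))"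
  proof (rule sum.reindex_bij_witness[where i = "\<lambda>m. (m a, m(a := 0))" and j = "\<lambda>(k, m). m(a := k)"])
    fix km assume km: "km \<in> Sigma {..n} (\<lambda>k. comps L (n - k))"
    obtain k m where kmd: "km = (k, m)" by (cases km)
    have k: "k \<le> n" and m: "m \<in> comps L (n - k)" using km kmd by auto
    have ma: "m a = 0" using m insert.hyps by (auto simp: comps_def)
    have sL: "(\<Sum>l\<in>L. (m(a := k)) l) = (\<Sum>l\<in>L. m l)"
      using insert.hyps by (intro sum.cong) auto
    have pL: "(\<Prod>l\<in>L. f ((m(a := k)) l)) = (\<Prod>l\<in>L. f (m l))" for f :: "nat \<Rightarrow> 'b::comm_monoid_mult"
      using insert.hyps by (intro prod.cong) auto
    have sm: "(\<Sum>l\<in>L. m l) = n - k" using m by (simp add: comps_def)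
    show "(case km of (k, m) \<Rightarrow> m(a := k)) \<in> comps (insert a L) n"
      using kmd m k insert.hyps sL sm by (auto simp: comps_def)
    show "(\<lambda>m. (m a, m(a := 0))) (case km of (k, m) \<Rightarrow> m(a := k)) = km"
      using kmd ma by auto
    have "of_nat (n choose k) * mnq L m = mnq (insert a L) (m(a := k))"
    proof -
      have f: "fact k * fact (n - k) * (n choose k) = (fact n :: nat)" by (rule binomial_fact_lemma[OF k])
      have f': "(fact k * fact (n - k) * of_nat (n choose k) :: rat) = fact n"
        using arg_cong[OF f, of "of_nat :: nat \<Rightarrow> rat"] by (simp only: of_nat_mult of_nat_fact)
      have eqC: "(of_nat (n choose k) :: rat) = fact n / (fact k * fact (n - k))"
        by (subst eq_divide_eq) (use f' in \<open>simp add: mult_ac\<close>)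
      have eqA: "mnq (insert a L) (m(a := k)) = fact n / (fact k * (\<Prod>l\<in>L. fact (m l)))"
        using insert.hyps sL sm k pL[of "\<lambda>x. fact x"] by (simp add: mnq_def)
      have eqB: "mnq L m = fact (n - k) / (\<Prod>l\<in>L. fact (m l))" by (simp add: mnq_def sm)
      have P0: "(\<Prod>l\<in>L. fact (m l) :: rat) \<noteq> 0" using insert.hyps by simp
      show ?thesis unfolding eqA eqB eqC using P0 by (simp add: field_simps)
    qed
    then show "sc (mnq (insert a L) ((case km of (k, m) \<Rightarrow> m(a := k)))) *
        (\<Prod>l\<in>insert a L. u l ^ (case km of (k, m) \<Rightarrow> m(a := k)) l) =
        (case km of (k, m) \<Rightarrow> sc (of_nat (n choose k) * mnq L m) * u a ^ k * ?P m)"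
    proof -
      have "(\<Prod>l\<in>insert a L. u l ^ (m(a := k)) l) = u a ^ k * ?P m"
      proof -
        have "(\<Prod>l\<in>L. u l ^ (m(a := k)) l) = ?P m"
          using insert.hyps by (intro prod.cong) auto
        thus ?thesis using insert.hyps by simp
      qed
      then show ?thesis using kmd \<open>of_nat (n choose k) * mnq L m = mnq (insert a L) (m(a := k))\<close>
        by (simp add: mult.assoc)
    qed
  next
    fix m assume m: "m \<in> comps (insert a L) n"
    have sL: "(\<Sum>l\<in>L. (m(a := 0)) l) = (\<Sum>l\<in>L. m l)"
      using insert.hyps by (intro sum.cong) auto
    have "m a + (\<Sum>l\<in>L. m l) = n" using m insert.hyps by (simp add: comps_def)
    then show "(\<lambda>(k, m). m(a := k)) (m a, m(a := 0)) = m" by simp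
    show "(m a, m(a := 0)) \<in> Sigma {..n} (\<lambda>k. comps L (n - k))"
      using m insert.hyps sL \<open>m a + (\<Sum>l\<in>L. m l) = n\<close> by (auto simp: comps_def)
  qed
  finally show ?case .
qed



definition mterm :: "rat \<Rightarrow> nat \<Rightarrow> nat \<Rightarrow> nat \<Rightarrow> R2 fps" where
  "mterm c a b e = fps_const (mon2 c a b) * fps_X ^ e"

lemma mterm_mult: "mterm c a b e * mterm c' a' b' e' = mterm (c * c') (a + a') (b + b') (e + e')"
  by (simp add: mterm_def mon2_mult[symmetric] power_add mult_ac)

lemma mterm_one: "mterm 1 0 0 0 = 1" by (simp add: mterm_def mon2_one)

lemma mterm_power: "mterm c a b e ^ k = mterm (c ^ k) (k * a) (k * b) (k * e)"
  by (induction k) (simp_all add: mterm_one mterm_mult add_ac)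

lemma prod_mterm:
  assumes "finite L"
  shows "(\<Prod>l\<in>L. mterm (c l) (a l) (b l) (e l) ^ k l) =
    mterm (\<Prod>l\<in>L. c l ^ k l) (\<Sum>l\<in>L. k l * a l) (\<Sum>l\<in>L. k l * b l) (\<Sum>l\<in>L. k l * e l)"
  using assms by (induction L rule: finite_induct) (simp_all add: mterm_one mterm_power mterm_mult)

lemma c2_sc_nth: "c2 ((sc q * Z) $ N) i j = q * c2 (Z $ N) i j"
  by (simp add: sc_def c2_scal)

lemma c2_mterm_nth: "c2 (mterm c a b e $ N) i j = (if N = e \<and> i = a \<and> j = b then c else 0)"
  by (simp add: mterm_def fps_X_power_mult_right_nth c2_mon2 mult.commute[of _ "fps_X ^ e"] fps_X_power_mult_nth)

lemma c2_pow_mterms: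
  assumes "finite L"
  shows "c2 (((\<Sum>l\<in>L. mterm (c l) (a l) (b l) (e l)) ^ n) $ N) i j =
    (\<Sum>m\<in>comps L n. if (\<Sum>l\<in>L. m l * e l) = N \<and> (\<Sum>l\<in>L. m l * a l) = i \<and> (\<Sum>l\<in>L. m l * b l) = j
       then mnq L m * (\<Prod>l\<in>L. c l ^ m l) else 0)"
  by (simp add: multinomial[OF assms] prod_mterm[OF assms] fps_sum_nth c2_sum c2_sc_nth c2_mterm_nth
      cong: if_cong) (intro sum.cong refl, auto)



definition BB :: "nat \<Rightarrow> (nat \<times> nat) set" where "BB M = {..M} \<times> {..<3}"
definition lc :: "nat \<Rightarrow> nat \<times> nat \<Rightarrow> rat" where
  "lc p l = (if snd l = 2 then (if fst l = 0 then 0 else -1) else 1) / of_nat p ^ fst l"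
definition la :: "nat \<Rightarrow> nat \<Rightarrow> nat \<times> nat \<Rightarrow> nat" where
  "la p s l = (if snd l = 0 then p ^ (fst l * s) else 0)"
definition lb :: "nat \<Rightarrow> nat \<Rightarrow> nat \<times> nat \<Rightarrow> nat" where
  "lb p s l = (if snd l = 1 then p ^ (fst l * s) else 0)"
definition le :: "nat \<Rightarrow> nat \<Rightarrow> nat \<times> nat \<Rightarrow> nat" where
  "le p s l = (if snd l = 2 then p ^ (fst l * s) else 0)"
definition phi :: "nat \<Rightarrow> nat \<Rightarrow> nat \<Rightarrow> R2 fps" where
  "phi p s M = (\<Sum>l\<in>BB M. mterm (lc p l) (la p s l) (lb p s l) (le p s l))"

lemma finite_BB[simp]: "finite (BB M)" by (simp add: BB_def)

lemma sum_BB: "(\<Sum>l\<in>BB M. g l) = (\<Sum>r\<le>M. g (r,0) + g (r,1) + g (r,2))"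
proof -
  have "(\<Sum>l\<in>BB M. g l) = (\<Sum>r\<le>M. \<Sum>t<3. g (r,t))"
    unfolding BB_def sum.cartesian_product by simp
  also have "\<dots> = (\<Sum>r\<le>M. g (r,0) + g (r,1) + g (r,2))"
    by (simp add: numeral_3_eq_3 numeral_2_eq_2 add_ac)
  finally show ?thesis .
qed

lemma prod_BB: "(\<Prod>l\<in>BB M. g l) = (\<Prod>r\<le>M. g (r,0) * g (r,1) * g (r,2))"
proof -
  have "(\<Prod>l\<in>BB M. g l) = (\<Prod>r\<le>M. \<Prod>t<3. g (r,t))"
    unfolding BB_def prod.cartesian_product by simp
  also have "\<dots> = (\<Prod>r\<le>M. g (r,0) * g (r,1) * g (r,2))"
    by (simp add: numeral_3_eq_3 numeral_2_eq_2 mult_ac)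
  finally show ?thesis .
qed

context
  fixes p s M :: nat and W :: "R2 fps"
  assumes p2: "p \<ge> 2" and s1: "s \<ge> 1"
    and W0: "W $ 0 = 0" and Weq: "W = fps_X * (phi p s M oo W)"
begin

lemma W_coeff:
  "c2 (W $ Suc n) i j = (\<Sum>m\<in>comps (BB M) (Suc n).
     if (\<Sum>l\<in>BB M. m l * le p s l) = n \<and> (\<Sum>l\<in>BB M. m l * la p s l) = i \<and> (\<Sum>l\<in>BB M. m l * lb p s l) = j
       then mnq (BB M) m * (\<Prod>l\<in>BB M. lc p l ^ m l) / of_nat (Suc n) else 0)"
proof -
  have eq: "of_nat (Suc n) * W $ Suc n = (phi p s M ^ Suc n) $ n"
    by (rule lagrange_coeff[OF W0 Weq])
  have "c2 (of_nat (Suc n) * W $ Suc n) i j = c2 ((phi p s M ^ Suc n) $ n) i j"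
    by (simp only: eq)
  hence "of_nat (Suc n) * c2 (W $ Suc n) i j = c2 ((phi p s M ^ Suc n) $ n) i j"
    by (simp only: mon2_of_nat c2_scal)
  hence "c2 (W $ Suc n) i j = c2 ((phi p s M ^ Suc n) $ n) i j / of_nat (Suc n)"
    by (simp add: field_simps del: of_nat_Suc)
  also have "\<dots> = (\<Sum>m\<in>comps (BB M) (Suc n).
     if (\<Sum>l\<in>BB M. m l * le p s l) = n \<and> (\<Sum>l\<in>BB M. m l * la p s l) = i \<and> (\<Sum>l\<in>BB M. m l * lb p s l) = j
       then mnq (BB M) m * (\<Prod>l\<in>BB M. lc p l ^ m l) / of_nat (Suc n) else 0)"
    unfolding phi_def c2_pow_mterms[OF finite_BB] sum_divide_distrib
    by (intro sum.cong refl) auto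
  finally show ?thesis .
qed

lemma q_ge: "r \<ge> 1 \<Longrightarrow> p ^ (r * s) \<ge> 2"
proof -
  assume "r \<ge> 1"
  hence "r * s \<ge> 1" using s1 by simp
  hence "p ^ (r * s) \<ge> p ^ 1" using p2 by (intro power_increasing) auto
  thus ?thesis using p2 by simp
qed

lemma q_pos: "p ^ (r * s) \<ge> 1"
  using p2 by simp

lemma W_sgood: "sgood W"
  unfolding sgood_def
proof (intro allI impI)
  fix N i j assume nz: "c2 (W $ N) i j \<noteq> 0"
  show "N < 2 * (i + j)"
  proof (cases N)
    case 0 then show ?thesis using nz W0 by simp
  next
    case (Suc n)
    from nz obtain m where m: "m \<in> comps (BB M) (Suc n)"
      and e: "(\<Sum>l\<in>BB M. m l * le p s l) = n" and a: "(\<Sum>l\<in>BB M. m l * la p s l) = i"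
      and b: "(\<Sum>l\<in>BB M. m l * lb p s l) = j" and pr: "(\<Prod>l\<in>BB M. lc p l ^ m l) \<noteq> 0"
      unfolding Suc W_coeff by (auto elim!: sum.not_neutral_contains_not_neutral split: if_splits)
    have m02: "m (0,2) = 0"
    proof (rule ccontr)
      assume "m (0,2) \<noteq> 0"
      moreover have "(0,2) \<in> BB M" by (simp add: BB_def)
      ultimately have "(\<Prod>l\<in>BB M. lc p l ^ m l) = 0"
        by (intro prod_zero bexI[of _ "(0,2)"]) (auto simp: lc_def)
      with pr show False by simp
    qed
    define X0 where "X0 = (\<Sum>r\<le>M. m (r,0))"
    define X1 where "X1 = (\<Sum>r\<le>M. m (r,1))"
    define K where "K = (\<Sum>r\<le>M. m (r,2))"
    have sn: "Suc n = X0 + X1 + K"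
      using m by (simp add: comps_def sum_BB X0_def X1_def K_def sum.distrib)
    have "i = (\<Sum>r\<le>M. m (r,0) * p ^ (r * s))"
      using a by (simp add: sum_BB la_def)
    hence i: "X0 \<le> i" unfolding X0_def
      by (simp, intro sum_mono) (use q_pos in simp)
    have "j = (\<Sum>r\<le>M. m (r,1) * p ^ (r * s))"
      using b by (simp add: sum_BB lb_def)
    hence j: "X1 \<le> j" unfolding X1_def
      by (simp, intro sum_mono) (use q_pos in simp)
    have "n = (\<Sum>r\<le>M. m (r,2) * p ^ (r * s))"
      using e by (simp add: sum_BB le_def)
    moreover have "(\<Sum>r\<le>M. 2 * m (r,2)) \<le> (\<Sum>r\<le>M. m (r,2) * p ^ (r * s))"
    proof (intro sum_mono)
      fix r assume "r \<in> {..M}"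
      show "2 * m (r,2) \<le> m (r,2) * p ^ (r * s)"
      proof (cases "r = 0")
        case True then show ?thesis using m02 by simp
      next
        case False then show ?thesis using q_ge[of r] by simp
      qed
    qed
    ultimately have "2 * K \<le> n" unfolding K_def by (simp add: sum_distrib_left)
    then have "Suc n < 2 * (i + j)" using sn i j by simp
    then show ?thesis using Suc by simp
  qed
qed

lemma W_good: "good W" using W_sgood by (rule sgood_good)

lemma term_sgood:
  assumes l: "l \<in> BB M"
  shows "sgood (fps_const (mon2 (lc p l) (la p s l) (lb p s l)) * W ^ le p s l)"
proof (cases "snd l = 2")
  case True
  then have "le p s l \<ge> 1" using q_pos by (simp add: le_def)
  then have "W ^ le p s l = W ^ (le p s l - 1) * W"
    by (metis power_minus_mult zero_less_one less_le_trans)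
  then show ?thesis
    by (simp only: mult.assoc[symmetric]) (intro sgood_mult good_mult good_const good_power W_good W_sgood)
next
  case False
  then have e: "le p s l = 0" by (simp add: le_def)
  have pos: "la p s l + lb p s l \<ge> 1" using False l q_pos[of "fst l"]
    by (auto simp: la_def lb_def BB_def)
  show ?thesis unfolding e sgood_def
    using pos by (auto simp: c2_mon2 split: if_splits)
qed

lemma W_expand: "W = (\<Sum>l\<in>BB M. fps_X * (fps_const (mon2 (lc p l) (la p s l) (lb p s l)) * W ^ le p s l))"
proof -
  have "phi p s M oo W = (\<Sum>l\<in>BB M. fps_const (mon2 (lc p l) (la p s l) (lb p s l)) * W ^ le p s l)"
    unfolding phi_def fps_compose_sum_distrib
  proof (intro sum.cong refl)
    fix l
    have "mterm (lc p l) (la p s l) (lb p s l) (le p s l) oo W =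
          fps_const (mon2 (lc p l) (la p s l) (lb p s l)) * (fps_X ^ le p s l oo W)"
      by (simp add: mterm_def fps_const_mult_apply_left)
    also have "fps_X ^ le p s l oo W = W ^ le p s l"
      using fps_compose_power[OF W0, of fps_X "le p s l"] W0 by simp
    finally show "mterm (lc p l) (la p s l) (lb p s l) (le p s l) oo W =
          fps_const (mon2 (lc p l) (la p s l) (lb p s l)) * W ^ le p s l" .
  qed
  then show ?thesis by (subst Weq) (simp add: sum_distrib_left)
qed

lemma evW_eq: "ev W = (\<Sum>l\<in>BB M. mon2 (lc p l) (la p s l) (lb p s l) * ev W ^ le p s l)"
proof -
  have "ev W = (\<Sum>l\<in>BB M. ev (fps_X * (fps_const (mon2 (lc p l) (la p s l) (lb p s l)) * W ^ le p s l)))"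
    by (subst W_expand) (simp add: ev_sum)
  also have "\<dots> = (\<Sum>l\<in>BB M. mon2 (lc p l) (la p s l) (lb p s l) * ev W ^ le p s l)"
  proof (intro sum.cong refl)
    fix l assume l: "l \<in> BB M"
    show "ev (fps_X * (fps_const (mon2 (lc p l) (la p s l) (lb p s l)) * W ^ le p s l)) =
      mon2 (lc p l) (la p s l) (lb p s l) * ev W ^ le p s l"
      by (simp add: ev_Xmult[OF term_sgood[OF l]] ev_mult good_const good_power W_good ev_const ev_power)
  qed
  finally show ?thesis .
qed

lemma evW_00: "c2 (ev W) 0 0 = 0"
  using W0 by (simp add: c2_ev)

lemma log_identity:
  "(\<Sum>r\<le>M. c2 (ev W ^ (p ^ (r * s))) i j / of_nat p ^ r) =
   (\<Sum>r\<le>M. ((if i = p ^ (r * s) \<and> j = 0 then 1 else 0) + (if i = 0 \<and> j = p ^ (r * s) then 1 else 0)) / of_nat p ^ r)"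
proof -
  let ?F = "ev W"
  have e0: "c2 ?F i j = (\<Sum>r\<le>M. ((if i = p ^ (r * s) \<and> j = 0 then 1 else 0) + (if i = 0 \<and> j = p ^ (r * s) then 1 else 0)) / of_nat p ^ r
       + (if r = 0 then 0 else - (c2 (?F ^ (p ^ (r * s))) i j / of_nat p ^ r)))"
    apply (subst evW_eq)
    apply (simp add: c2_sum sum_BB c2_mon2 lc_def la_def lb_def le_def c2_scal)
    apply (intro sum.cong refl)
    apply (auto simp: field_simps)
    done
  define G where "G r = c2 (?F ^ (p ^ (r * s))) i j / of_nat p ^ r" for r
  define H where "H r = ((if i = p ^ (r * s) \<and> j = 0 then 1 else 0) + (if i = 0 \<and> j = p ^ (r * s) then 1 else 0)) / (of_nat p ^ r :: rat)" for r
  have e1: "c2 ?F i j = (\<Sum>r\<le>M. H r) + (\<Sum>r\<le>M. (if r = 0 then 0 else - G r))"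
    using e0 unfolding G_def H_def by (simp add: sum.distrib)
  have e2: "(\<Sum>r\<le>M. (if r = 0 then 0 else - G r)) = (\<Sum>r<M. - G (Suc r))"
    by (subst sum.atMost_shift) simp
  have e3: "(\<Sum>r\<le>M. G r) = G 0 + (\<Sum>r<M. G (Suc r))"
    by (rule sum.atMost_shift)
  have e4: "G 0 = c2 ?F i j" by (simp add: G_def)
  have "(\<Sum>r\<le>M. G r) = (\<Sum>r\<le>M. H r)"
    using e1 e2 e3 e4 by (simp add: sum_negf)
  then show ?thesis unfolding G_def H_def .
qed

end



definition aof :: "(nat \<times> nat \<Rightarrow> nat) \<Rightarrow> nat \<Rightarrow> nat" where "aof m r = m (r,0)"
definition bof :: "(nat \<times> nat \<Rightarrow> nat) \<Rightarrow> nat \<Rightarrow> nat" where "bof m r = m (r,1)"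
definition cof :: "(nat \<times> nat \<Rightarrow> nat) \<Rightarrow> nat \<Rightarrow> nat" where "cof m r = m (r,2)"
definition nuof :: "(nat \<times> nat \<Rightarrow> nat) \<Rightarrow> nat \<Rightarrow> nat" where
  "nuof m r = (if r = 0 then 0 else m (r,0) + m (r,1) + m (r,2))"
definition mof :: "nat \<Rightarrow> (nat \<Rightarrow> nat) \<Rightarrow> (nat \<Rightarrow> nat) \<Rightarrow> (nat \<Rightarrow> nat) \<Rightarrow> nat \<times> nat \<Rightarrow> nat" where
  "mof M a b c l = (if fst l \<le> M \<and> snd l < 3 then
      (if snd l = 0 then a (fst l) else if snd l = 1 then b (fst l) else c (fst l)) else 0)"

lemma q_gt: assumes "p \<ge> 2" "s \<ge> 1" shows "r < p ^ (r * s)"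
proof -
  have "r < 2 ^ r" by (rule less_exp)
  also have "(2::nat) ^ r \<le> p ^ r" using assms by (intro power_mono) auto
  also have "p ^ r \<le> p ^ (r * s)" using assms by (intro power_increasing) auto
  finally show ?thesis .
qed

lemma sum_supp:
  fixes h :: "nat \<Rightarrow> 'a::comm_monoid_add"
  assumes "\<And>r. \<nu> r \<noteq> 0 \<Longrightarrow> r \<in> {1..M}" "\<And>r. r \<in> {1..M} \<Longrightarrow> \<nu> r = 0 \<Longrightarrow> h r = 0"
  shows "(\<Sum>r\<in>{r. \<nu> r \<noteq> 0}. h r) = (\<Sum>r\<in>{1..M}. h r)"
  by (rule sum.mono_neutral_left) (use assms in auto)

lemma prod_supp:
  fixes h :: "nat \<Rightarrow> 'a::comm_monoid_mult"
  assumes "\<And>r. \<nu> r \<noteq> 0 \<Longrightarrow> r \<in> {1..M}" "\<And>r. r \<in> {1..M} \<Longrightarrow> \<nu> r = 0 \<Longrightarrow> h r = 1"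
  shows "(\<Prod>r\<in>{r. \<nu> r \<noteq> 0}. h r) = (\<Prod>r\<in>{1..M}. h r)"
  by (rule prod.mono_neutral_left) (use assms in auto)

lemma atMost_split0: "(\<Sum>r\<le>M. h r) = h 0 + (\<Sum>r\<in>{1..M}. h (r::nat))"
proof -
  have "{..M} = insert 0 {1..M}" by auto
  thus ?thesis by simp
qed

lemma atMost_split0_prod: "(\<Prod>r\<le>M. h r) = h 0 * (\<Prod>r\<in>{1..M}. h (r::nat))"
proof -
  have "{..M} = insert 0 {1..M}" by auto
  thus ?thesis by simp
qed

lemma size_bound:
  assumes p2: "p \<ge> 2" and s1: "s \<ge> 1"
  assumes m02: "m (0,2) = 0" and sz: "(\<Sum>l\<in>BB M. m l) = Suc n"
    and e: "(\<Sum>l\<in>BB M. m l * le p s l) = n" and a: "(\<Sum>l\<in>BB M. m l * la p s l) = i"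
    and b: "(\<Sum>l\<in>BB M. m l * lb p s l) = j"
  shows "Suc n < 2 * (i + j)"
proof -
  have q_pos: "p ^ (r * s) \<ge> 1" for r using p2 by simp
  have q_ge: "p ^ (r * s) \<ge> 2" if "r \<ge> 1" for r
  proof -
    have "r * s \<ge> 1" using s1 that by simp
    hence "p ^ (r * s) \<ge> p ^ 1" using p2 by (intro power_increasing) auto
    thus ?thesis using p2 by simp
  qed
  define X0 where "X0 = (\<Sum>r\<le>M. m (r,0))"
  define X1 where "X1 = (\<Sum>r\<le>M. m (r,1))"
  define K where "K = (\<Sum>r\<le>M. m (r,2))"
  have sn: "Suc n = X0 + X1 + K"
    using sz by (simp add: sum_BB X0_def X1_def K_def sum.distrib)
  have "i = (\<Sum>r\<le>M. m (r,0) * p ^ (r * s))"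
    using a by (simp add: sum_BB la_def)
  hence i: "X0 \<le> i" unfolding X0_def
    by (simp, intro sum_mono) (use q_pos in simp)
  have "j = (\<Sum>r\<le>M. m (r,1) * p ^ (r * s))"
    using b by (simp add: sum_BB lb_def)
  hence j: "X1 \<le> j" unfolding X1_def
    by (simp, intro sum_mono) (use q_pos in simp)
  have "n = (\<Sum>r\<le>M. m (r,2) * p ^ (r * s))"
    using e by (simp add: sum_BB le_def)
  moreover have "(\<Sum>r\<le>M. 2 * m (r,2)) \<le> (\<Sum>r\<le>M. m (r,2) * p ^ (r * s))"
  proof (intro sum_mono)
    fix r assume "r \<in> {..M}"
    show "2 * m (r,2) \<le> m (r,2) * p ^ (r * s)"
    proof (cases "r = 0")
      case True then show ?thesis using m02 by simp
    next
      case False then show ?thesis using q_ge[of r] by simp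
    qed
  qed
  ultimately have "2 * K \<le> n" unfolding K_def by (simp add: sum_distrib_left)
  then show "Suc n < 2 * (i + j)" using sn i j by simp
qed


context
  fixes p s M i j :: nat
  assumes p2: "p \<ge> 2" and s1: "s \<ge> 1" and d1: "i + j \<ge> 1" and dM: "i + j \<le> M"
begin

abbreviation qq where "qq r \<equiv> p ^ (r * s)"

lemma qq_pos: "qq r \<ge> 1" using p2 by simp

lemma qq_sub: "(qq r - 1) * x + x = qq r * x"
  using qq_pos[of r] by (simp add: algebra_simps)

lemma nu_supp:
  assumes nu: "\<nu> \<in> nu_set p s (i + j - 1)"
  shows "\<nu> r \<noteq> 0 \<Longrightarrow> r \<in> {1..M}"
proof -
  assume nz: "\<nu> r \<noteq> 0"
  have "\<nu> 0 = 0" using nu by (simp add: nu_set_def)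
  hence r0: "r \<noteq> 0" using nz by (metis)
  have fin: "finite {r. \<nu> r \<noteq> 0}" and sm: "(\<Sum>r\<in>{r. \<nu> r \<noteq> 0}. (qq r - 1) * \<nu> r) = i + j - 1"
    using nu by (auto simp: nu_set_def)
  have "(qq r - 1) * \<nu> r \<le> (\<Sum>r\<in>{r. \<nu> r \<noteq> 0}. (qq r - 1) * \<nu> r)"
    using fin nz by (intro member_le_sum) auto
  hence le: "(qq r - 1) * \<nu> r \<le> i + j - 1" using sm by simp
  have "r \<le> M"
  proof (rule ccontr)
    assume "\<not> r \<le> M"
    hence "r > i + j" using dM by simp
    moreover have "r < qq r" by (rule q_gt[OF p2 s1])
    ultimately have "qq r - 1 > i + j - 1" by simp
    moreover have "(qq r - 1) * 1 \<le> (qq r - 1) * \<nu> r" using nz by (intro mult_le_mono2) simp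
    ultimately show False using le by linarith
  qed
  thus "r \<in> {1..M}" using r0 by simp
qed

lemma nu_set_finite: "finite (nu_set p s (i + j - 1))"
proof -
  have "nu_set p s (i + j - 1) \<subseteq> {f. \<forall>x. (x \<in> {1..M} \<longrightarrow> f x \<in> {..i+j}) \<and> (x \<notin> {1..M} \<longrightarrow> f x = 0)}"
  proof
    fix \<nu> assume nu: "\<nu> \<in> nu_set p s (i + j - 1)"
    have fin: "finite {r. \<nu> r \<noteq> 0}" and sm: "(\<Sum>r\<in>{r. \<nu> r \<noteq> 0}. (qq r - 1) * \<nu> r) = i + j - 1"
      using nu by (auto simp: nu_set_def)
    { fix x assume x: "x \<in> {1..M}"
      have "\<nu> x \<le> i + j"
      proof (cases "\<nu> x = 0")
        case False
        have "(qq x - 1) * \<nu> x \<le> (\<Sum>r\<in>{r. \<nu> r \<noteq> 0}. (qq r - 1) * \<nu> r)"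
          using fin False by (intro member_le_sum) auto
        moreover have "qq x - 1 \<ge> 1"
        proof -
          have "1 \<le> x" using x by simp
          moreover have "x < qq x" by (rule q_gt[OF p2 s1])
          ultimately show ?thesis by linarith
        qed
        moreover have "\<nu> x \<le> (qq x - 1) * \<nu> x" using \<open>qq x - 1 \<ge> 1\<close> by simp
        ultimately show ?thesis using sm by linarith
      qed simp }
    then show "\<nu> \<in> {f. \<forall>x. (x \<in> {1..M} \<longrightarrow> f x \<in> {..i+j}) \<and> (x \<notin> {1..M} \<longrightarrow> f x = 0)}"
      using nu_supp[OF nu] by auto
  qed
  moreover have "finite {f. \<forall>x. (x \<in> {1..M} \<longrightarrow> f x \<in> {..i+j}) \<and> (x \<notin> {1..M} \<longrightarrow> f x = (0::nat))}"
    by (rule finite_set_of_finite_funs) auto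
  ultimately show ?thesis by (rule finite_subset)
qed

lemma T_facts:
  assumes nu: "\<nu> \<in> nu_set p s (i + j - 1)" and abc: "(a, b, c) \<in> idx_set p s \<nu> i j"
  shows "\<And>r. r > M \<Longrightarrow> a r = 0 \<and> b r = 0 \<and> c r = 0"
    and "c 0 = 0" and "\<nu> 0 = 0"
    and "\<And>r. r \<in> {1..M} \<Longrightarrow> a r + b r + c r = \<nu> r"
    and "a 0 + (\<Sum>r\<in>{1..M}. qq r * a r) = i"
    and "b 0 + (\<Sum>r\<in>{1..M}. qq r * b r) = j"
    and "(\<Sum>r\<in>{1..M}. (qq r - 1) * \<nu> r) = i + j - 1"
proof -
  have sup: "\<And>r. \<nu> r \<noteq> 0 \<Longrightarrow> r \<in> {1..M}" by (rule nu_supp[OF nu])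
  have abc': "c 0 = 0" "\<And>r. r \<ge> 1 \<Longrightarrow> a r + b r + c r = \<nu> r"
    "a 0 + (\<Sum>r\<in>{r. \<nu> r \<noteq> 0}. qq r * a r) = i"
    "b 0 + (\<Sum>r\<in>{r. \<nu> r \<noteq> 0}. qq r * b r) = j"
    using abc by (auto simp: idx_set_def)
  show "c 0 = 0" by (rule abc'(1))
  show "\<nu> 0 = 0" using nu by (simp add: nu_set_def)
  show "\<And>r. r > M \<Longrightarrow> a r = 0 \<and> b r = 0 \<and> c r = 0"
  proof -
    fix r assume "r > M"
    hence "\<nu> r = 0" using sup by fastforce
    moreover have "r \<ge> 1" using \<open>r > M\<close> by simp
    ultimately show "a r = 0 \<and> b r = 0 \<and> c r = 0" using abc'(2)[of r] by simp
  qed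
  show "\<And>r. r \<in> {1..M} \<Longrightarrow> a r + b r + c r = \<nu> r" using abc'(2) by simp
  have z: "\<And>r. r \<in> {1..M} \<Longrightarrow> \<nu> r = 0 \<Longrightarrow> a r = 0 \<and> b r = 0 \<and> c r = 0"
    using abc'(2) by fastforce
  show "a 0 + (\<Sum>r\<in>{1..M}. qq r * a r) = i"
    using abc'(3) sum_supp[of \<nu> M "\<lambda>r. qq r * a r"] sup z by simp
  show "b 0 + (\<Sum>r\<in>{1..M}. qq r * b r) = j"
    using abc'(4) sum_supp[of \<nu> M "\<lambda>r. qq r * b r"] sup z by simp
  show "(\<Sum>r\<in>{1..M}. (qq r - 1) * \<nu> r) = i + j - 1"
    using nu sum_supp[of \<nu> M "\<lambda>r. (qq r - 1) * \<nu> r"] sup by (simp add: nu_set_def)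
qed

lemma mof_outside: "l \<notin> BB M \<Longrightarrow> mof M a b c l = 0"
  by (cases l) (auto simp: mof_def BB_def)

lemma mof_sums:
  "(\<Sum>l\<in>BB M. mof M a b c l) = (\<Sum>r\<le>M. a r + b r + c r)"
  "(\<Sum>l\<in>BB M. mof M a b c l * la p s l) = (\<Sum>r\<le>M. qq r * a r)"
  "(\<Sum>l\<in>BB M. mof M a b c l * lb p s l) = (\<Sum>r\<le>M. qq r * b r)"
  "(\<Sum>l\<in>BB M. mof M a b c l * le p s l) = (\<Sum>r\<le>M. qq r * c r)"
  by (auto simp: sum_BB mof_def la_def lb_def le_def intro!: sum.cong)

lemma m_sums:
  assumes "m \<in> comps (BB M) N"
  shows "N = (\<Sum>r\<le>M. m (r,0) + m (r,1) + m (r,2))"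
    "(\<Sum>l\<in>BB M. m l * la p s l) = (\<Sum>r\<le>M. qq r * m (r,0))"
    "(\<Sum>l\<in>BB M. m l * lb p s l) = (\<Sum>r\<le>M. qq r * m (r,1))"
    "(\<Sum>l\<in>BB M. m l * le p s l) = (\<Sum>r\<le>M. qq r * m (r,2))"
  using assms by (auto simp: comps_def sum_BB la_def lb_def le_def intro!: sum.cong)

definition Sset where
  "Sset = {(n, m). n < 2 * (i + j) \<and> m \<in> comps (BB M) (Suc n) \<and>
      (\<Sum>l\<in>BB M. m l * le p s l) = n \<and> (\<Sum>l\<in>BB M. m l * la p s l) = i \<and>
      (\<Sum>l\<in>BB M. m l * lb p s l) = j \<and> m (0,2) = 0}"

lemma S_facts:
  assumes "(n, m) \<in> Sset"
  shows "\<And>r t. r > M \<Longrightarrow> m (r,t) = 0"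
    and "\<And>r t. t \<ge> 3 \<Longrightarrow> m (r,t) = 0"
    and "m (0,2) = 0"
    and "m (0,0) + m (0,1) + (\<Sum>r\<in>{1..M}. nuof m r) = Suc n"
    and "m (0,0) + (\<Sum>r\<in>{1..M}. qq r * m (r,0)) = i"
    and "m (0,1) + (\<Sum>r\<in>{1..M}. qq r * m (r,1)) = j"
    and "(\<Sum>r\<in>{1..M}. qq r * m (r,2)) = n"
    and "m \<in> comps (BB M) (Suc n)"
proof -
  have m: "m \<in> comps (BB M) (Suc n)" and e: "(\<Sum>l\<in>BB M. m l * le p s l) = n"
    and a: "(\<Sum>l\<in>BB M. m l * la p s l) = i" and b: "(\<Sum>l\<in>BB M. m l * lb p s l) = j"
    and m02: "m (0,2) = 0"
    using assms by (auto simp: Sset_def)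
  show "m \<in> comps (BB M) (Suc n)" by (rule m)
  show "m (0,2) = 0" by (rule m02)
  show "\<And>r t. r > M \<Longrightarrow> m (r,t) = 0" using m by (auto simp: comps_def BB_def)
  show "\<And>r t. t \<ge> 3 \<Longrightarrow> m (r,t) = 0" using m by (auto simp: comps_def BB_def)
  have "Suc n = (\<Sum>r\<le>M. m (r,0) + m (r,1) + m (r,2))" by (rule m_sums(1)[OF m])
  also have "\<dots> = m (0,0) + m (0,1) + (\<Sum>r\<in>{1..M}. nuof m r)"
    using m02 by (simp add: atMost_split0 nuof_def)
  finally show "m (0,0) + m (0,1) + (\<Sum>r\<in>{1..M}. nuof m r) = Suc n" ..
  show "m (0,0) + (\<Sum>r\<in>{1..M}. qq r * m (r,0)) = i"
    using m_sums(2)[OF m] a by (simp add: atMost_split0)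
  show "m (0,1) + (\<Sum>r\<in>{1..M}. qq r * m (r,1)) = j"
    using m_sums(3)[OF m] b by (simp add: atMost_split0)
  show "(\<Sum>r\<in>{1..M}. qq r * m (r,2)) = n"
    using m_sums(4)[OF m] e m02 by (simp add: atMost_split0)
qed

definition Tset where "Tset = Sigma (nu_set p s (i + j - 1)) (\<lambda>\<nu>. idx_set p s \<nu> i j)"

lemma S_to_T:
  assumes "(n, m) \<in> Sset"
  shows "(nuof m, aof m, bof m, cof m) \<in> Tset"
proof -
  note F = S_facts[OF assms]
  have sup: "\<And>r. nuof m r \<noteq> 0 \<Longrightarrow> r \<in> {1..M}"
  proof -
    fix r assume nz: "nuof m r \<noteq> 0"
    hence "r \<noteq> 0" by (auto simp: nuof_def split: if_splits)
    moreover have "r \<le> M"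
    proof (rule ccontr)
      assume "\<not> r \<le> M" hence "M < r" by simp
      hence "nuof m r = 0" using F(1) by (simp add: nuof_def)
      with nz show False by simp
    qed
    ultimately show "r \<in> {1..M}" by simp
  qed
  have z: "\<And>r. nuof m r = 0 \<Longrightarrow> r \<ge> 1 \<Longrightarrow> m (r,0) = 0 \<and> m (r,1) = 0 \<and> m (r,2) = 0"
    by (auto simp: nuof_def)
  have fin: "finite {r. nuof m r \<noteq> 0}"
    by (rule finite_subset[of _ "{1..M}"]) (use sup in auto)
  have sq: "(\<Sum>r\<in>{1..M}. (qq r - 1) * nuof m r) + (\<Sum>r\<in>{1..M}. nuof m r) = (\<Sum>r\<in>{1..M}. qq r * nuof m r)"
    by (simp only: sum.distrib[symmetric] qq_sub)
  have "(\<Sum>r\<in>{1..M}. qq r * nuof m r) = (\<Sum>r\<in>{1..M}. qq r * m (r,0)) + (\<Sum>r\<in>{1..M}. qq r * m (r,1)) + (\<Sum>r\<in>{1..M}. qq r * m (r,2))"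
    by (simp add: nuof_def sum.distrib[symmetric] algebra_simps)
  hence "(\<Sum>r\<in>{1..M}. (qq r - 1) * nuof m r) = i + j - 1"
    using sq F(4-7) by linarith
  hence nu: "nuof m \<in> nu_set p s (i + j - 1)"
    unfolding nu_set_def using fin sum_supp[of "nuof m" M "\<lambda>r. (qq r - 1) * nuof m r"] sup
    by (simp add: nuof_def)
  have "aof m 0 + (\<Sum>r\<in>{r. nuof m r \<noteq> 0}. qq r * aof m r) = i"
    using F(5) sum_supp[of "nuof m" M "\<lambda>r. qq r * aof m r"] sup z by (simp add: aof_def)
  moreover have "bof m 0 + (\<Sum>r\<in>{r. nuof m r \<noteq> 0}. qq r * bof m r) = j"
    using F(6) sum_supp[of "nuof m" M "\<lambda>r. qq r * bof m r"] sup z by (simp add: bof_def)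
  ultimately have "(aof m, bof m, cof m) \<in> idx_set p s (nuof m) i j"
    unfolding idx_set_def using F(3) by (auto simp: aof_def bof_def cof_def nuof_def)
  with nu show ?thesis by (simp add: Tset_def)
qed

definition jmap where "jmap = (\<lambda>(n::nat, m). (nuof m, aof m, bof m, cof m))"
definition imap where "imap = (\<lambda>(\<nu>::nat\<Rightarrow>nat, a, b, c). ((\<Sum>r\<le>M. a r + b r + c r) - 1, mof M a b c))"

lemma ij_S: assumes "x \<in> Sset" shows "imap (jmap x) = x"
proof -
  obtain n m where x: "x = (n, m)" by (cases x)
  note F = S_facts[OF assms[unfolded x]]
  have "mof M (aof m) (bof m) (cof m) = m"
  proof (rule ext)
    fix l :: "nat \<times> nat"
    obtain r t where l: "l = (r, t)" by (cases l)
    show "mof M (aof m) (bof m) (cof m) l = m l"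
    proof (cases "r \<le> M \<and> t < 3")
      case True
      then have "t = 0 \<or> t = 1 \<or> t = 2" by auto
      then show ?thesis using True l by (auto simp: mof_def aof_def bof_def cof_def)
    next
      case False
      then show ?thesis using l F(1,2) by (auto simp: mof_def not_le not_less)
    qed
  qed
  moreover have "(\<Sum>r\<le>M. aof m r + bof m r + cof m r) = Suc n"
    using m_sums(1)[OF F(8)] by (simp add: aof_def bof_def cof_def)
  ultimately show ?thesis by (simp add: x imap_def jmap_def)
qed

lemma T_to_S: assumes "x \<in> Tset" shows "imap x \<in> Sset" and "jmap (imap x) = x"
proof -
  obtain \<nu> a b c where x: "x = (\<nu>, a, b, c)" by (cases x) auto
  have nu: "\<nu> \<in> nu_set p s (i + j - 1)" and abc: "(a, b, c) \<in> idx_set p s \<nu> i j"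
    using assms x by (auto simp: Tset_def)
  note tf = T_facts[OF nu abc]
  note sup = nu_supp[OF nu]
  define N where "N = (\<Sum>r\<le>M. a r + b r + c r)"
  define m where "m = mof M a b c"
  define V where "V = (\<Sum>r\<in>{1..M}. \<nu> r)"
  define D where "D = (\<Sum>r\<in>{1..M}. (qq r - 1) * \<nu> r)"
  have NV: "N = a 0 + b 0 + V"
    unfolding N_def V_def using tf(2,4) by (simp add: atMost_split0)
  have sq: "D + V = (\<Sum>r\<in>{1..M}. qq r * \<nu> r)"
    unfolding D_def V_def by (simp only: sum.distrib[symmetric] qq_sub)
  have "(\<Sum>r\<in>{1..M}. qq r * \<nu> r) = (\<Sum>r\<in>{1..M}. qq r * a r) + (\<Sum>r\<in>{1..M}. qq r * b r) + (\<Sum>r\<in>{1..M}. qq r * c r)"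
  proof -
    have "(\<Sum>r\<in>{1..M}. qq r * \<nu> r) = (\<Sum>r\<in>{1..M}. qq r * a r + qq r * b r + qq r * c r)"
      by (intro sum.cong refl) (simp add: tf(4)[symmetric] algebra_simps)
    thus ?thesis by (simp add: sum.distrib)
  qed
  hence C: "(\<Sum>r\<in>{1..M}. qq r * c r) + 1 = N"
    using sq NV tf(5,6,7) d1 unfolding D_def by linarith
  have mla: "(\<Sum>l\<in>BB M. m l * la p s l) = i"
    unfolding m_def mof_sums using tf(5) by (simp add: atMost_split0)
  have mlb: "(\<Sum>l\<in>BB M. m l * lb p s l) = j"
    unfolding m_def mof_sums using tf(6) by (simp add: atMost_split0)
  have mle: "(\<Sum>l\<in>BB M. m l * le p s l) = N - 1"
    unfolding m_def mof_sums using C tf(2) by (simp add: atMost_split0)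
  have msz: "(\<Sum>l\<in>BB M. m l) = Suc (N - 1)"
    unfolding m_def mof_sums using C N_def by simp
  have m02: "m (0,2) = 0" using tf(2) by (simp add: m_def mof_def)
  have comp: "m \<in> comps (BB M) (Suc (N - 1))"
    using msz by (simp add: comps_def m_def mof_outside)
  have "Suc (N - 1) < 2 * (i + j)"
    by (rule size_bound[OF p2 s1 m02 msz mle mla mlb])
  then show "imap x \<in> Sset"
    using comp mle mla mlb m02 by (simp add: Sset_def imap_def x N_def[symmetric] m_def[symmetric])
  have "nuof m = \<nu>"
  proof (rule ext)
    fix r show "nuof m r = \<nu> r"
    proof (cases "r = 0")
      case True then show ?thesis using tf(3) by (simp add: nuof_def)
    next
      case False
      show ?thesis
      proof (cases "r \<le> M")
        case True then show ?thesis using False tf(4)[of r] by (simp add: nuof_def m_def mof_def)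
      next
        case nM: False
        then have "\<nu> r = 0" using sup by fastforce
        then show ?thesis using nM by (simp add: nuof_def m_def mof_def)
      qed
    qed
  qed
  moreover have "aof m = a" "bof m = b" "cof m = c"
    using tf(1) by (auto simp: aof_def bof_def cof_def m_def mof_def fun_eq_iff not_le)
  ultimately show "jmap (imap x) = x"
    by (simp add: jmap_def imap_def x m_def)
qed

lemma term_eq:
  assumes x: "(n, m) \<in> Sset"
  shows "mnq (BB M) m * (\<Prod>l\<in>BB M. lc p l ^ m l) / of_nat (Suc n) =
         term_G p (nuof m) (aof m) (bof m) (cof m)"
proof -
  note F = S_facts[OF x]
  have sup: "\<And>r. nuof m r \<noteq> 0 \<Longrightarrow> r \<in> {1..M}"
  proof -
    fix r assume nz: "nuof m r \<noteq> 0"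
    hence "r \<noteq> 0" by (auto simp: nuof_def split: if_splits)
    moreover have "r \<le> M"
    proof (rule ccontr)
      assume "\<not> r \<le> M" hence "M < r" by simp
      hence "nuof m r = 0" using F(1) by (simp add: nuof_def)
      with nz show False by simp
    qed
    ultimately show "r \<in> {1..M}" by simp
  qed
  have z: "\<And>r. r \<in> {1..M} \<Longrightarrow> nuof m r = 0 \<Longrightarrow> m (r,0) = 0 \<and> m (r,1) = 0 \<and> m (r,2) = 0"
    by (auto simp: nuof_def)
  define Z where "Z = (\<Sum>r\<in>{1..M}. m (r,2))"
  define E where "E = (\<Sum>r\<in>{1..M}. r * nuof m r)"
  define PF where "PF = (\<Prod>r\<in>{1..M}. fact (m (r,0)) * fact (m (r,1)) * fact (m (r,2)) :: nat)"
  have E1: "(\<Sum>r\<in>{r. nuof m r \<noteq> 0}. cof m r) = Z"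
    unfolding Z_def using sum_supp[of "nuof m" M "\<lambda>r. cof m r"] sup z by (simp add: cof_def)
  have "(\<Sum>r\<in>{r. nuof m r \<noteq> 0}. aof m r + bof m r + cof m r) = (\<Sum>r\<in>{1..M}. nuof m r)"
  proof -
    have "(\<Sum>r\<in>{r. nuof m r \<noteq> 0}. aof m r + bof m r + cof m r) = (\<Sum>r\<in>{1..M}. aof m r + bof m r + cof m r)"
      using sum_supp[of "nuof m" M "\<lambda>r. aof m r + bof m r + cof m r"] sup z by (simp add: aof_def bof_def cof_def)
    also have "\<dots> = (\<Sum>r\<in>{1..M}. nuof m r)"
      by (intro sum.cong refl) (auto simp: aof_def bof_def cof_def nuof_def)
    finally show ?thesis .
  qed
  hence E2: "aof m 0 + bof m 0 + (\<Sum>r\<in>{r. nuof m r \<noteq> 0}. aof m r + bof m r + cof m r) - 1 = n"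
    using F(4) by (simp add: aof_def bof_def)
  have E3: "(\<Prod>r\<in>{r. nuof m r \<noteq> 0}. fact (aof m r) * fact (bof m r) * fact (cof m r)) = PF"
    unfolding PF_def using prod_supp[of "nuof m" M "\<lambda>r. fact (aof m r) * fact (bof m r) * fact (cof m r) :: nat"] sup z
    by (simp add: aof_def bof_def cof_def)
  have E4: "(\<Sum>r\<in>{r. nuof m r \<noteq> 0}. r * nuof m r) = E"
    unfolding E_def using sum_supp[of "nuof m" M "\<lambda>r. r * nuof m r"] sup by simp
  have tG: "term_G p (nuof m) (aof m) (bof m) (cof m) =
      (-1) ^ Z * fact n / (of_nat (fact (m (0,0)) * fact (m (0,1)) * PF) * of_nat p ^ E)"
    unfolding term_G_def Let_def E1 E2 E3 E4 by (simp add: aof_def bof_def of_nat_fact)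
  have P1: "(\<Prod>l\<in>BB M. fact (m l) :: rat) = of_nat (fact (m (0,0)) * fact (m (0,1)) * PF)"
    unfolding prod_BB atMost_split0_prod PF_def using F(3) by (simp add: of_nat_prod of_nat_fact)
  have "(\<Prod>l\<in>BB M. lc p l ^ m l) = (\<Prod>r\<in>{1..M}. (-1) ^ m (r,2) / of_nat p ^ (r * nuof m r))"
    unfolding prod_BB atMost_split0_prod
  proof -
    have h0: "lc p (0,0) ^ m (0,0) * lc p (0,1) ^ m (0,1) * lc p (0,2) ^ m (0,2) = 1"
      using F(3) by (simp add: lc_def)
    have "(\<Prod>r\<in>{1..M}. lc p (r,0) ^ m (r,0) * lc p (r,1) ^ m (r,1) * lc p (r,2) ^ m (r,2)) =
          (\<Prod>r\<in>{1..M}. (-1) ^ m (r,2) / of_nat p ^ (r * nuof m r))"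
    proof (intro prod.cong refl)
      fix r assume r: "r \<in> {1..M}"
      have "lc p (r,0) ^ m (r,0) * lc p (r,1) ^ m (r,1) * lc p (r,2) ^ m (r,2) =
          (1 / (of_nat p ^ r)) ^ (m (r,0) + m (r,1)) * ((-1) / of_nat p ^ r) ^ m (r,2)"
        using r by (simp add: lc_def power_add)
      also have "\<dots> = (-1) ^ m (r,2) / (of_nat p ^ r) ^ (m (r,0) + m (r,1) + m (r,2))"
        unfolding power_divide power_add by simp
      also have "\<dots> = (-1) ^ m (r,2) / of_nat p ^ (r * nuof m r)"
        using r by (simp add: nuof_def power_mult)
      finally show "lc p (r,0) ^ m (r,0) * lc p (r,1) ^ m (r,1) * lc p (r,2) ^ m (r,2) =
          (-1) ^ m (r,2) / of_nat p ^ (r * nuof m r)" .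
    qed
    then show "lc p (0,0) ^ m (0,0) * lc p (0,1) ^ m (0,1) * lc p (0,2) ^ m (0,2) *
      (\<Prod>r\<in>{1..M}. lc p (r,0) ^ m (r,0) * lc p (r,1) ^ m (r,1) * lc p (r,2) ^ m (r,2)) =
      (\<Prod>r\<in>{1..M}. (-1) ^ m (r,2) / of_nat p ^ (r * nuof m r))"
      using h0 by simp
  qed
  also have "\<dots> = (-1) ^ Z / of_nat p ^ E"
    unfolding Z_def E_def by (simp add: prod_dividef power_sum)
  finally have P2: "(\<Prod>l\<in>BB M. lc p l ^ m l) = (-1) ^ Z / of_nat p ^ E" .
  have sz: "(\<Sum>l\<in>BB M. m l) = Suc n" using F(8) by (simp add: comps_def)
  have "mnq (BB M) m * (\<Prod>l\<in>BB M. lc p l ^ m l) / of_nat (Suc n) =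
        fact (Suc n) / of_nat (fact (m (0,0)) * fact (m (0,1)) * PF) * ((-1) ^ Z / of_nat p ^ E) / of_nat (Suc n)"
    unfolding mnq_def sz P1 P2 ..
  also have "\<dots> = (-1) ^ Z * fact n / (of_nat (fact (m (0,0)) * fact (m (0,1)) * PF) * of_nat p ^ E)"
  proof -
    have gen: "\<And>c f A z B :: rat. c \<noteq> 0 \<Longrightarrow> c * f / A * (z / B) / c = z * f / (A * B)"
      by (simp add: field_simps)
    have fs: "(fact (Suc n) :: rat) = of_nat (Suc n) * fact n" by simp
    show ?thesis unfolding fs by (rule gen) simp
  qed
  finally show ?thesis using tG by simp
qed

lemma Sset_sub: "Sset \<subseteq> Sigma {..<2*(i+j)} (\<lambda>n. comps (BB M) (Suc n))"
  by (auto simp: Sset_def)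

lemma Sset_finite: "finite Sset"
  by (rule finite_subset[OF Sset_sub]) (intro finite_SigmaI finite_comps finite_BB finite_lessThan)

lemma Tset_finite: "finite Tset"
proof -
  have "Tset \<subseteq> jmap ` Sset"
  proof
    fix x assume "x \<in> Tset"
    then show "x \<in> jmap ` Sset" using T_to_S[of x] by (metis image_eqI)
  qed
  thus ?thesis by (rule finite_subset) (simp add: Sset_finite)
qed

lemma alpha_Tset: "alpha_formula p s i j = (\<Sum>(\<nu>, a, b, c)\<in>Tset. term_G p \<nu> a b c)"
proof -
  have fin: "\<forall>\<nu>\<in>nu_set p s (i + j - 1). finite (idx_set p s \<nu> i j)"
  proof
    fix \<nu> assume "\<nu> \<in> nu_set p s (i + j - 1)"
    have "idx_set p s \<nu> i j \<subseteq> snd ` Tset"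
      using \<open>\<nu> \<in> nu_set p s (i + j - 1)\<close> by (auto simp: Tset_def image_iff)
    thus "finite (idx_set p s \<nu> i j)" by (rule finite_subset) (simp add: Tset_finite)
  qed
  show ?thesis unfolding alpha_formula_def Tset_def
    by (subst sum.Sigma[OF nu_set_finite fin]) (simp add: split_def)
qed

lemma evW_formula:
  fixes W :: "R2 fps"
  assumes W0: "W $ 0 = 0" and Weq: "W = fps_X * (phi p s M oo W)"
  shows "c2 (ev W) i j = alpha_formula p s i j"
proof -
  define gg where "gg n m = (if (\<Sum>l\<in>BB M. m l * le p s l) = n \<and> (\<Sum>l\<in>BB M. m l * la p s l) = i \<and> (\<Sum>l\<in>BB M. m l * lb p s l) = j
       then mnq (BB M) m * (\<Prod>l\<in>BB M. lc p l ^ m l) / of_nat (Suc n) else 0)" for n m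
  have "c2 (ev W) i j = (\<Sum>n<2*(i+j). c2 (W $ Suc n) i j)"
    by (simp add: c2_ev sum.atMost_shift W0)
  also have "\<dots> = (\<Sum>n<2*(i+j). \<Sum>m\<in>comps (BB M) (Suc n). gg n m)"
    unfolding W_coeff[OF p2 s1 W0 Weq] gg_def ..
  also have "\<dots> = (\<Sum>(n,m)\<in>Sigma {..<2*(i+j)} (\<lambda>n. comps (BB M) (Suc n)). gg n m)"
    by (rule sum.Sigma) (auto intro: finite_comps)
  also have "\<dots> = (\<Sum>(n,m)\<in>Sset. gg n m)"
  proof (rule sum.mono_neutral_right)
    show "finite (Sigma {..<2*(i+j)} (\<lambda>n. comps (BB M) (Suc n)))"
      by (intro finite_SigmaI finite_comps finite_BB finite_lessThan)
    show "Sset \<subseteq> Sigma {..<2*(i+j)} (\<lambda>n. comps (BB M) (Suc n))" by (rule Sset_sub)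
    show "\<forall>x\<in>Sigma {..<2*(i+j)} (\<lambda>n. comps (BB M) (Suc n)) - Sset. (case x of (n, m) \<Rightarrow> gg n m) = 0"
    proof
      fix x assume x: "x \<in> Sigma {..<2*(i+j)} (\<lambda>n. comps (BB M) (Suc n)) - Sset"
      obtain n m where xd: "x = (n, m)" by (cases x)
      show "(case x of (n, m) \<Rightarrow> gg n m) = 0"
      proof (cases "m (0,2) = 0")
        case True
        then show ?thesis using x xd by (auto simp: Sset_def gg_def)
      next
        case False
        have "(0,2) \<in> BB M" by (simp add: BB_def)
        then have "(\<Prod>l\<in>BB M. lc p l ^ m l) = 0"
          using False by (intro prod_zero bexI[of _ "(0,2)"]) (auto simp: lc_def)
        then show ?thesis using xd by (simp add: gg_def)
      qed
    qed
  qed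
  also have "\<dots> = (\<Sum>(n,m)\<in>Sset. term_G p (nuof m) (aof m) (bof m) (cof m))"
  proof (intro sum.cong refl)
    fix x assume x: "x \<in> Sset"
    obtain n m where xd: "x = (n, m)" by (cases x)
    have "gg n m = term_G p (nuof m) (aof m) (bof m) (cof m)"
      using x xd term_eq[of n m] by (simp add: gg_def Sset_def)
    then show "(case x of (n, m) \<Rightarrow> gg n m) = (case x of (n, m) \<Rightarrow> term_G p (nuof m) (aof m) (bof m) (cof m))"
      using xd by simp
  qed
  also have "\<dots> = (\<Sum>(\<nu>, a, b, c)\<in>Tset. term_G p \<nu> a b c)"
  proof (rule sum.reindex_bij_witness[where i = imap and j = jmap])
    show "\<And>a. a \<in> Sset \<Longrightarrow> imap (jmap a) = a" by (rule ij_S)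
    show "\<And>a. a \<in> Sset \<Longrightarrow> jmap a \<in> Tset" using S_to_T by (auto simp: jmap_def)
    show "\<And>b. b \<in> Tset \<Longrightarrow> jmap (imap b) = b" by (rule T_to_S(2))
    show "\<And>b. b \<in> Tset \<Longrightarrow> imap b \<in> Sset" by (rule T_to_S(1))
    show "\<And>a. a \<in> Sset \<Longrightarrow> (case jmap a of (\<nu>, a, b, c) \<Rightarrow> term_G p \<nu> a b c) =
        (case a of (n, m) \<Rightarrow> term_G p (nuof m) (aof m) (bof m) (cof m))"
      by (auto simp: jmap_def)
  qed
  also have "\<dots> = alpha_formula p s i j" by (rule alpha_Tset[symmetric])
  finally show ?thesis .
qed

end



lemma comp_biv_c2: "comp_biv f \<alpha> i j = (\<Sum>n\<in>{0..i+j}. f n * c2 (biv \<alpha> ^ n) i j)"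
  by (simp add: comp_biv_def c2_def)

lemma fgl_unique:
  assumes fa: "fgl_with_log f \<alpha>" and fb: "fgl_with_log f \<beta>" and f1: "f 1 \<noteq> 0"
  shows "\<alpha> i j = \<beta> i j"
proof -
  let ?A = "biv \<alpha>" and ?B = "biv \<beta>"
  have a00: "\<alpha> 0 0 = 0" and b00: "\<beta> 0 0 = 0" using fa fb by (auto simp: fgl_with_log_def)
  have "\<forall>i j. i + j = d \<longrightarrow> \<alpha> i j = \<beta> i j" for d
  proof (induction d rule: less_induct)
    case (less d)
    show ?case
    proof (intro allI impI)
      fix i j assume ij: "i + j = d"
      show "\<alpha> i j = \<beta> i j"
      proof (cases "d = 0")
        case True then show ?thesis using ij a00 b00 by simp
      next
        case False
        have IH: "\<And>i' j'. i' + j' < d \<Longrightarrow> \<alpha> i' j' = \<beta> i' j'" using less by blast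
        have key: "c2 (?A ^ n) i j - (if n = 1 then \<alpha> i j else 0) = c2 (?B ^ n) i j - (if n = 1 then \<beta> i j else 0)" for n
        proof (cases "n \<le> 1")
          case True
          then consider "n = 0" | "n = 1" by linarith
          then show ?thesis
          proof cases
            case 1 then show ?thesis using False ij by (auto simp: c2_one)
          qed simp
        next
          case n2: False
          have A0: "c2 (?A ^ (n - 1)) 0 0 = 0" "c2 (?B ^ (n - 1)) 0 0 = 0"
            using ord2_power[of ?A "n - 1"] ord2_power[of ?B "n - 1"] a00 b00 n2
            by (auto simp: ord2_def)
          have pw: "?A ^ n = ?A * ?A ^ (n - 1)" "?B ^ n = ?B * ?B ^ (n - 1)"
            using n2 by (auto simp: power_eq_if)
          have "c2 (?A * ?A ^ (n - 1)) i j = c2 (?B * ?B ^ (n - 1)) i j"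
            unfolding c2_mult
          proof (intro sum.cong refl)
            fix j1 i1 assume j1: "j1 \<in> {0..j}" and i1: "i1 \<in> {0..i}"
            show "c2 ?A i1 j1 * c2 (?A ^ (n - 1)) (i - i1) (j - j1) = c2 ?B i1 j1 * c2 (?B ^ (n - 1)) (i - i1) (j - j1)"
            proof (cases "i1 = 0 \<and> j1 = 0")
              case True then show ?thesis using a00 b00 by simp
            next
              case nz: False
              show ?thesis
              proof (cases "i1 = i \<and> j1 = j")
                case True then show ?thesis using A0 by simp
              next
                case False
                have "i1 + j1 < d" using False j1 i1 ij by auto
                hence e1: "c2 ?A i1 j1 = c2 ?B i1 j1" using IH by simp
                have "bagree (i - i1) (j - j1) ?A ?B"
                  unfolding bagree_def using nz j1 i1 ij IH by auto
                hence "bagree (i - i1) (j - j1) (?A ^ (n - 1)) (?B ^ (n - 1))" by (rule bagree_power)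
                hence "c2 (?A ^ (n - 1)) (i - i1) (j - j1) = c2 (?B ^ (n - 1)) (i - i1) (j - j1)"
                  by (simp add: bagree_def)
                then show ?thesis using e1 by simp
              qed
            qed
          qed
          then show ?thesis using n2 pw by simp
        qed
        have split: "comp_biv f \<gamma> i j = (\<Sum>n\<in>{0..i+j}. f n * (c2 (biv \<gamma> ^ n) i j - (if n = 1 then \<gamma> i j else 0))) + f 1 * \<gamma> i j" for \<gamma>
        proof -
          have "(\<Sum>n\<in>{0..i+j}. f n * (if n = 1 then \<gamma> i j else 0)) = f 1 * \<gamma> i j"
            using False ij by (simp add: if_distrib[of "\<lambda>x. f _ * x"] cong: if_cong)
          then show ?thesis unfolding comp_biv_c2 by (simp add: right_diff_distrib sum_subtractf)
        qed
        have "comp_biv f \<alpha> i j = comp_biv f \<beta> i j"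
          using fa fb by (simp add: fgl_with_log_def)
        then have "f 1 * \<alpha> i j = f 1 * \<beta> i j" unfolding split[of \<alpha>] split[of \<beta>] key by simp
        then show ?thesis using f1 by simp
      qed
    qed
  qed
  then show ?thesis by blast
qed

context
  fixes p s :: nat
  assumes p2: "p \<ge> 2" and s1: "s \<ge> 1"
begin

lemma qq_inj: "p ^ (a * s) = p ^ (b * s) \<Longrightarrow> a = b"
proof -
  assume "p ^ (a * s) = p ^ (b * s)"
  hence "a * s = b * s" using p2 by (simp add: power_inject_exp)
  thus "a = b" using s1 by simp
qed

lemma glog_qq: "glog_coeff p s (p ^ (r * s)) = 1 / of_nat p ^ r"
proof -
  have "(THE k. p ^ (r * s) = p ^ (k * s)) = r"
    by (rule the_equality) (auto dest: qq_inj)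
  thus ?thesis by (auto simp: glog_coeff_def)
qed

lemma glog_sum:
  assumes "n \<le> M"
  shows "(\<Sum>r\<le>M. (if n = p ^ (r * s) then 1 / of_nat p ^ r else 0)) = glog_coeff p s n"
proof (cases "\<exists>k. n = p ^ (k * s)")
  case True
  then obtain k where k: "n = p ^ (k * s)" by blast
  have "k < n" using q_gt[OF p2 s1, of k] k by simp
  hence kM: "k \<le> M" using assms by simp
  have "(\<Sum>r\<le>M. (if n = p ^ (r * s) then 1 / of_nat p ^ r else 0)) = (\<Sum>r\<le>M. (if r = k then 1 / of_nat p ^ r else (0::rat)))"
  proof (intro sum.cong refl)
    fix r
    have "(n = p ^ (r * s)) = (r = k)" using qq_inj[of k r] k by auto
    then show "(if n = p ^ (r * s) then 1 / of_nat p ^ r else 0) = (if r = k then 1 / of_nat p ^ r else (0::rat))"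
      by simp
  qed
  also have "\<dots> = 1 / of_nat p ^ k" using kM by simp
  finally show ?thesis using k glog_qq by simp
next
  case False
  then have "\<And>r. n \<noteq> p ^ (r * s)" by blast
  then show ?thesis using False by (simp add: glog_coeff_def)
qed

lemma comp_reindex:
  assumes h: "\<And>n. n > d \<Longrightarrow> h n = 0" and dM: "d \<le> M"
  shows "(\<Sum>n\<in>{0..d}. glog_coeff p s n * h n) = (\<Sum>r\<le>M. h (p ^ (r * s)) / of_nat p ^ r)"
proof -
  have "(\<Sum>n\<in>{0..d}. glog_coeff p s n * h n) =
        (\<Sum>n\<in>{0..d}. \<Sum>r\<le>M. (if n = p ^ (r * s) then h n / of_nat p ^ r else 0))"
  proof (intro sum.cong refl)
    fix n assume "n \<in> {0..d}"
    hence "n \<le> M" using dM by simp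
    then show "glog_coeff p s n * h n = (\<Sum>r\<le>M. (if n = p ^ (r * s) then h n / of_nat p ^ r else 0))"
      by (simp add: glog_sum[symmetric] sum_distrib_right if_distrib[of "\<lambda>x. x * h n"] cong: if_cong)
  qed
  also have "\<dots> = (\<Sum>r\<le>M. \<Sum>n\<in>{0..d}. (if n = p ^ (r * s) then h n / of_nat p ^ r else 0))"
    by (rule sum.swap)
  also have "\<dots> = (\<Sum>r\<le>M. h (p ^ (r * s)) / of_nat p ^ r)"
  proof (intro sum.cong refl)
    fix r
    show "(\<Sum>n\<in>{0..d}. (if n = p ^ (r * s) then h n / of_nat p ^ r else 0)) = h (p ^ (r * s)) / of_nat p ^ r"
      using h[of "p ^ (r * s)"] by (cases "p ^ (r * s) \<le> d") (auto simp: sum.delta')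
  qed
  finally show ?thesis .
qed

definition beta where "beta i j = (if i + j = 0 then 0 else alpha_formula p s i j)"

lemma fgl_beta: "fgl_with_log (glog_coeff p s) beta"
  unfolding fgl_with_log_def
proof (intro conjI allI)
  show "beta 0 0 = 0" by (simp add: beta_def)
  fix i0 j0 :: nat
  define d0 where "d0 = i0 + j0"
  define M where "M = Suc d0"
  obtain W where W0: "W $ 0 = 0" and Weq: "W = fps_X * (phi p s M oo W)"
    using lagrange_exists[of "phi p s M"] by blast
  let ?F = "ev W"
  have F00: "c2 ?F 0 0 = 0" by (rule evW_00[OF p2 s1 W0 Weq])
  have bag: "bagree i0 j0 (biv beta) ?F"
    unfolding bagree_def
  proof (intro allI impI)
    fix i j assume i: "i \<le> i0" and j: "j \<le> j0"
    show "c2 (biv beta) i j = c2 ?F i j"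
    proof (cases "i + j = 0")
      case True then show ?thesis using F00 by (simp add: beta_def)
    next
      case False
      have d1: "i + j \<ge> 1" using False by linarith
      have dM: "i + j \<le> M" using i j by (simp add: M_def d0_def)
      have "c2 (biv beta) i j = alpha_formula p s i j"
        by (simp only: c2_biv beta_def if_not_P[OF False])
      then show ?thesis using evW_formula[OF p2 s1 d1 dM W0 Weq] by simp
    qed
  qed
  have "comp_biv (glog_coeff p s) beta i0 j0 = (\<Sum>n\<in>{0..d0}. glog_coeff p s n * c2 (?F ^ n) i0 j0)"
    unfolding comp_biv_c2 d0_def using bagree_power[OF bag] by (simp add: bagree_def)
  also have "\<dots> = (\<Sum>r\<le>M. c2 (?F ^ (p ^ (r * s))) i0 j0 / of_nat p ^ r)"
  proof (rule comp_reindex)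
    show "d0 \<le> M" by (simp add: M_def)
    fix n assume "n > d0"
    then show "c2 (?F ^ n) i0 j0 = 0" using ord2_power[OF F00, of n] by (simp add: ord2_def d0_def)
  qed
  also have "\<dots> = (\<Sum>r\<le>M. ((if i0 = p ^ (r * s) \<and> j0 = 0 then 1 else 0) + (if i0 = 0 \<and> j0 = p ^ (r * s) then 1 else 0)) / of_nat p ^ r)"
    by (rule log_identity[OF p2 s1 W0 Weq])
  also have "\<dots> = (if j0 = 0 then (\<Sum>r\<le>M. (if i0 = p ^ (r * s) then 1 / of_nat p ^ r else 0)) else 0) +
       (if i0 = 0 then (\<Sum>r\<le>M. (if j0 = p ^ (r * s) then 1 / of_nat p ^ r else 0)) else 0)"
  proof -
    have e1: "(\<Sum>r\<le>M. (if i0 = p ^ (r * s) \<and> j0 = 0 then 1 else 0) / (of_nat p ^ r :: rat)) =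
        (if j0 = 0 then (\<Sum>r\<le>M. (if i0 = p ^ (r * s) then 1 / of_nat p ^ r else 0)) else 0)"
      by (cases "j0 = 0") (auto intro!: sum.cong)
    have e2: "(\<Sum>r\<le>M. (if i0 = 0 \<and> j0 = p ^ (r * s) then 1 else 0) / (of_nat p ^ r :: rat)) =
        (if i0 = 0 then (\<Sum>r\<le>M. (if j0 = p ^ (r * s) then 1 / of_nat p ^ r else 0)) else 0)"
      by (cases "i0 = 0") (auto intro!: sum.cong)
    show ?thesis unfolding e1[symmetric] e2[symmetric] by (simp only: add_divide_distrib sum.distrib)
  qed
  also have "\<dots> = (if j0 = 0 then glog_coeff p s i0 else 0) + (if i0 = 0 then glog_coeff p s j0 else 0)"
  proof -
    have a: "i0 \<le> M" and b: "j0 \<le> M" by (simp_all add: M_def d0_def)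
    show ?thesis by (simp only: glog_sum[OF a] glog_sum[OF b])
  qed
  finally show "comp_biv (glog_coeff p s) beta i0 j0 =
      (if j0 = 0 then glog_coeff p s i0 else 0) + (if i0 = 0 then glog_coeff p s j0 else 0)" .
qed

end


lemma nat_dvd_power_minus_one:
  fixes x :: nat assumes "x \<ge> 1" shows "(x - 1) dvd (x ^ r - 1)"
proof (induction r)
  case 0 show ?case by simp
next
  case (Suc r)
  have xr: "x ^ r \<ge> 1" using assms by simp
  have "x ^ Suc r - 1 = x * (x ^ r - 1) + (x - 1)"
    using assms xr by (simp add: algebra_simps diff_mult_distrib2)
  moreover have "(x - 1) dvd x * (x ^ r - 1)" using Suc.IH by simp
  ultimately show ?case by simp
qed

theorem proposition3p1:
  fixes p s :: nat and \<alpha> :: "nat \<Rightarrow> nat \<Rightarrow> rat"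
  assumes "prime p" and "s \<ge> 1"
    and "fgl_with_log (glog_coeff p s) \<alpha>"
  shows "(\<forall>i j. i + j \<ge> 1 \<longrightarrow> \<alpha> i j = alpha_formula p s i j) \<and>
         (\<forall>i j. i + j \<ge> 1 \<and> \<not> (p ^ s - 1) dvd (i + j - 1) \<longrightarrow> \<alpha> i j = 0)"
proof -
  have p2: "p \<ge> 2" using assms(1) by (rule prime_ge_2_nat)
  have s1: "s \<ge> 1" by (rule assms(2))
  have "glog_coeff p s (p ^ (0 * s)) = 1 / of_nat p ^ 0" by (rule glog_qq[OF p2 s1])
  hence f1: "glog_coeff p s 1 \<noteq> 0" by simp
  have eq: "\<alpha> i j = beta p s i j" for i j
    by (rule fgl_unique[OF assms(3) fgl_beta[OF p2 s1] f1])
  have A: "\<forall>i j. i + j \<ge> 1 \<longrightarrow> \<alpha> i j = alpha_formula p s i j"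
    using eq by (simp add: beta_def[OF p2 s1])
  have B: "\<forall>i j. i + j \<ge> 1 \<and> \<not> (p ^ s - 1) dvd (i + j - 1) \<longrightarrow> \<alpha> i j = 0"
  proof (intro allI impI)
    fix i j assume h: "i + j \<ge> 1 \<and> \<not> (p ^ s - 1) dvd (i + j - 1)"
    have "nu_set p s (i + j - 1) = {}"
    proof (rule ccontr)
      assume "nu_set p s (i + j - 1) \<noteq> {}"
      then obtain \<nu> where nu: "\<nu> \<in> nu_set p s (i + j - 1)" by blast
      have sm: "(\<Sum>r\<in>{r. \<nu> r \<noteq> 0}. (p ^ (r * s) - 1) * \<nu> r) = i + j - 1"
        using nu by (simp add: nu_set_def)
      have "(p ^ s - 1) dvd (\<Sum>r\<in>{r. \<nu> r \<noteq> 0}. (p ^ (r * s) - 1) * \<nu> r)"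
      proof (rule dvd_sum)
        fix r
        have "p ^ (r * s) = (p ^ s) ^ r" by (simp add: power_mult[symmetric] mult.commute)
        moreover have "p ^ s \<ge> 1" using p2 by simp
        ultimately have "(p ^ s - 1) dvd (p ^ (r * s) - 1)" using nat_dvd_power_minus_one by simp
        then show "(p ^ s - 1) dvd (p ^ (r * s) - 1) * \<nu> r" by simp
      qed
      with sm h show False by simp
    qed
    then have "alpha_formula p s i j = 0" by (simp add: alpha_formula_def)
    moreover have "\<alpha> i j = alpha_formula p s i j" using A h by blast
    ultimately show "\<alpha> i j = 0" by simp
  qed
  show ?thesis using A B by blast
qed

end
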